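(* Let $G$ be an admissible kernel and let $h:\mathbb R\to\mathbb R$ be differentiable with bounded derivative. Then the operator $\mathbf H_{\phi,\varrho}$ is positive semi-definite, i.e. $\langle u,\mathbf H_{\phi,\varrho}u\rangle\ge0$ for all $u\in\mathcal L^2$. Consequently, if $\mathbf A$ is monotone (i.e. $\langle u-v,\mathbf A(u)-\mathbf A(v)\rangle\ge0$ for all $u,v\in\mathcal L^2$), then $\mathcal J$ is $\gamma$-strongly concave on $\mathcal L^2$, meaning $$\mathcal J(\theta u+(1-\theta)v)\ge\theta\mathcal J(u)+(1-\theta)\mathcal J(v)+\tfrac{\gamma\theta(1-\theta)}2\|u-v\|^2\quad\text{for all }u,v\in\mathcal L^2,\ \theta\in(0,1).$$
   Context: Fix $T>0$ and a filtered probability space $(\Omega,\mathcal F,(\mathcal F_t)_{t\in[0,T]},\mathbb P)$ satisfying the usual conditions; $\mathbb E_t$ denotes conditional expectation given $\mathcal F_t$. Let $\mathcal L^2$ be the Hilbert space of progressively measurable $f:[0,T]\times\Omega\to\mathbb R$ with $\mathbb E\int_0^T f_t^2\,dt<\infty$, with inner product $\langle f,g\rangle=\mathbb E\int_0^T f_tg_t\,dt$ and norm $\|f\|$. A Volterra kernel $G:[0,T]^2\to\mathbb R$ (i.e. $G(t,s)=0$ for $s>t$) is admissible if $C_G:=\sup_{t\in[0,T]}\int_0^t|G(t,s)|^2ds<\infty$; it induces $(\mathbf Gu)_t=\int_0^tG(t,s)u_s\,ds$ with adjoint $(\mathbf G^*u)_t=\int_t^TG(s,t)\mathbb E_t[u_s]\,ds$.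 Model data: constants $X_0>0$, $\gamma>0$, $\phi,\varrho\ge0$; a process $S\in\mathcal L^2$ with $S_T\in L^2(\Omega,\mathcal F_T,\mathbb P)$; a process $g\in\mathcal L^2$. For $u\in\mathcal L^2$ set $X^u_t=X_0+\int_0^tu_s\,ds$, $Z^u_t=g_t+(\mathbf Gu)_t$, and let $\alpha_t=\mathbb E_t[S_T-S_t]$. The performance functional is $$\mathcal J(u)=\mathbb E\Big[\int_0^T\big(\alpha_t-\tfrac\gamma2u_t-h(Z^u_t)\big)u_t\,dt-\tfrac\phi2\int_0^T(X^u_t)^2dt-\tfrac\varrho2(X^u_T)^2\Big]+X_0\mathbb E[S_T].$$ $(\mathbf A(u))_t=h(Z^u_t)+\int_t^TG(s,t)\mathbb E_t[h'(Z^u_s)u_s]\,ds$. The kernel $H_{\phi,\varrho}(t,s)=(\phi(T-t)+\varrho)\mathbb 1_{\{t>s\}}$ induces the operator $\mathbf H_{\phi,\varrho}$. *)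

theory Defs
  imports "HOL-Probability.Probability"
begin

type_synonym 'a proc = "real \<Rightarrow> 'a \<Rightarrow> real"

definition filtered_prob_space :: "'a measure \<Rightarrow> (real \<Rightarrow> 'a measure) \<Rightarrow> real \<Rightarrow> bool" where
  "filtered_prob_space M F T \<longleftrightarrow> prob_space M \<and>
     (\<forall>t\<in>{0..T}. subalgebra M (F t)) \<and>
     (\<forall>s t. 0 \<le> s \<and> s \<le> t \<and> t \<le> T \<longrightarrow> sets (F s) \<subseteq> sets (F t))"

definition usual_conditions :: "'a measure \<Rightarrow> (real \<Rightarrow> 'a measure) \<Rightarrow> real \<Rightarrow> bool" where
  "usual_conditions M F T \<longleftrightarrow>
     (\<forall>A B. B \<in> null_sets M \<and> A \<subseteq> B \<longrightarrow> A \<in> sets (F 0)) \<and>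
     (\<forall>t\<in>{0..<T}. sets (F t) = (\<Inter>s\<in>{t<..T}. sets (F s)))"

definition progressive :: "(real \<Rightarrow> 'a measure) \<Rightarrow> real \<Rightarrow> 'a proc \<Rightarrow> bool" where
  "progressive F T f \<longleftrightarrow>
     (\<forall>t\<in>{0..T}. (\<lambda>(s, \<omega>). f s \<omega>) \<in> borel_measurable (restrict_space lborel {0..t} \<Otimes>\<^sub>M F t))"

definition PM :: "'a measure \<Rightarrow> real \<Rightarrow> (real \<times> 'a) measure" where
  "PM M T = restrict_space lborel {0..T} \<Otimes>\<^sub>M M"

text \<open>The space \<L>^2 (as a set of representatives).\<close>
definition L2 :: "'a measure \<Rightarrow> (real \<Rightarrow> 'a measure) \<Rightarrow> real \<Rightarrow> 'a proc set" where
  "L2 M F T = {f. progressive F T f \<and> integrable (PM M T) (\<lambda>(s, \<omega>). (f s \<omega>)\<^sup>2)}"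

definition ip :: "'a measure \<Rightarrow> real \<Rightarrow> 'a proc \<Rightarrow> 'a proc \<Rightarrow> real" where
  "ip M T f g = integral\<^sup>L (PM M T) (\<lambda>(s, \<omega>). f s \<omega> * g s \<omega>)"

definition nrm :: "'a measure \<Rightarrow> real \<Rightarrow> 'a proc \<Rightarrow> real" where
  "nrm M T f = sqrt (ip M T f f)"

definition padd :: "'a proc \<Rightarrow> 'a proc \<Rightarrow> 'a proc" where
  "padd u v = (\<lambda>t \<omega>. u t \<omega> + v t \<omega>)"

definition pdiff :: "'a proc \<Rightarrow> 'a proc \<Rightarrow> 'a proc" where
  "pdiff u v = (\<lambda>t \<omega>. u t \<omega> - v t \<omega>)"

definition pscale :: "real \<Rightarrow> 'a proc \<Rightarrow> 'a proc" where
  "pscale c u = (\<lambda>t \<omega>. c * u t \<omega>)"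

definition admissible_kernel :: "real \<Rightarrow> (real \<Rightarrow> real \<Rightarrow> real) \<Rightarrow> bool" where
  "admissible_kernel T G \<longleftrightarrow>
     (\<lambda>(t, s). G t s) \<in> borel_measurable (lborel \<Otimes>\<^sub>M lborel) \<and>
     (\<forall>t\<in>{0..T}. \<forall>s\<in>{0..T}. t < s \<longrightarrow> G t s = 0) \<and>
     (\<exists>C::real. \<forall>t\<in>{0..T}.
        (\<integral>\<^sup>+ s. ennreal ((G t s)\<^sup>2) * indicator {0..t} s \<partial>lborel) \<le> ennreal C)"

definition volt :: "(real \<Rightarrow> real \<Rightarrow> real) \<Rightarrow> 'a proc \<Rightarrow> 'a proc" where
  "volt K u = (\<lambda>t \<omega>. (LINT s:{0..t}|lborel. K t s * u s \<omega>))"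

definition Hker :: "real \<Rightarrow> real \<Rightarrow> real \<Rightarrow> real \<Rightarrow> real \<Rightarrow> real" where
  "Hker T phi rho t s = (if s < t then phi * (T - t) + rho else 0)"

definition Xproc :: "real \<Rightarrow> 'a proc \<Rightarrow> 'a proc" where
  "Xproc X0 u = (\<lambda>t \<omega>. X0 + (LINT s:{0..t}|lborel. u s \<omega>))"

definition Zproc :: "'a proc \<Rightarrow> (real \<Rightarrow> real \<Rightarrow> real) \<Rightarrow> 'a proc \<Rightarrow> 'a proc" where
  "Zproc g G u = (\<lambda>t \<omega>. g t \<omega> + volt G u t \<omega>)"

definition alpha_version ::
  "'a measure \<Rightarrow> (real \<Rightarrow> 'a measure) \<Rightarrow> real \<Rightarrow> 'a proc \<Rightarrow> 'a proc \<Rightarrow> bool" where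
  "alpha_version M F T S alpha \<longleftrightarrow> progressive F T alpha \<and>
     (\<forall>t\<in>{0..T}. AE \<omega> in M.
        alpha t \<omega> = real_cond_exp M (F t) (\<lambda>\<omega>'. S T \<omega>' - S t \<omega>') \<omega>)"

definition J :: "'a measure \<Rightarrow> real \<Rightarrow> real \<Rightarrow> real \<Rightarrow> real \<Rightarrow> real \<Rightarrow> 'a proc \<Rightarrow> 'a proc
    \<Rightarrow> (real \<Rightarrow> real) \<Rightarrow> (real \<Rightarrow> real \<Rightarrow> real) \<Rightarrow> 'a proc \<Rightarrow> 'a proc \<Rightarrow> real" where
  "J M T X0 gam phi rho S alpha h G g u =
     (\<integral>\<omega>. (LINT t:{0..T}|lborel.
               (alpha t \<omega> - gam / 2 * u t \<omega> - h (Zproc g G u t \<omega>)) * u t \<omega>)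
          - phi / 2 * (LINT t:{0..T}|lborel. (Xproc X0 u t \<omega>)\<^sup>2)
          - rho / 2 * (Xproc X0 u T \<omega>)\<^sup>2 \<partial>M)
     + X0 * (\<integral>\<omega>. S T \<omega> \<partial>M)"

text \<open>Aop is a (progressive version of the) operator
  A(u)_t = h(Z^u_t) + int_t^T G(s,t) E_t[h'(Z^u_s) u_s] ds
  (the conditional expectation is pulled out of the ds-integral, by conditional Fubini).\<close>
definition A_version :: "'a measure \<Rightarrow> (real \<Rightarrow> 'a measure) \<Rightarrow> real \<Rightarrow> (real \<Rightarrow> real)
    \<Rightarrow> (real \<Rightarrow> real) \<Rightarrow> (real \<Rightarrow> real \<Rightarrow> real) \<Rightarrow> 'a proc \<Rightarrow> ('a proc \<Rightarrow> 'a proc) \<Rightarrow> bool" where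
  "A_version M F T h h' G g Aop \<longleftrightarrow>
     (\<forall>u\<in>L2 M F T. progressive F T (Aop u) \<and>
        (\<forall>t\<in>{0..T}. AE \<omega> in M.
           Aop u t \<omega> = h (Zproc g G u t \<omega>)
             + real_cond_exp M (F t)
                 (\<lambda>\<omega>'. (LINT s:{t..T}|lborel. G s t * (h' (Zproc g G u s \<omega>') * u s \<omega>'))) \<omega>))"

definition monotone_op :: "'a measure \<Rightarrow> (real \<Rightarrow> 'a measure) \<Rightarrow> real \<Rightarrow> ('a proc \<Rightarrow> 'a proc) \<Rightarrow> bool" where
  "monotone_op M F T Aop \<longleftrightarrow>
     (\<forall>u\<in>L2 M F T. \<forall>v\<in>L2 M F T. ip M T (pdiff u v) (pdiff (Aop u) (Aop v)) \<ge> 0)"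

end

theory Submission
  imports Defs
begin

lemma norm_integral_le_nn: "ennreal (norm (integral\<^sup>L M f)) \<le> (\<integral>\<^sup>+x. norm (f x) \<partial>M)"
  for f :: "_ \<Rightarrow> real"
  using integral_norm_bound_ennreal[of M f]
  by (cases "integrable M f") (auto simp: not_integrable_integral_eq)

locale fsetting =
  fixes M :: "'a measure" and F :: "real \<Rightarrow> 'a measure" and T :: real
  assumes T_pos: "T > 0" and filt: "filtered_prob_space M F T"
begin

abbreviation "L \<equiv> restrict_space lborel {0..T}"

lemma probM: "prob_space M" using filt unfolding filtered_prob_space_def by auto

lemma subalg: "t \<in> {0..T} \<Longrightarrow> subalgebra M (F t)" using filt unfolding filtered_prob_space_def by auto

lemma finL: "finite_measure L"
  using T_pos by (intro finite_measureI) (simp add: emeasure_restrict_space)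

lemma emL: "emeasure L (space L) = ennreal T"
  using T_pos by (simp add: emeasure_restrict_space)

sublocale PS: pair_sigma_finite L M
proof -
  interpret A: finite_measure L by (rule finL)
  interpret B: prob_space M by (rule probM)
  show "pair_sigma_finite L M" by unfold_locales
qed

sublocale MP: prob_space M by (rule probM)

lemma PM_eq: "PM M T = L \<Otimes>\<^sub>M M" by (simp add: PM_def)

lemma id_meas: "t \<in> {0..T} \<Longrightarrow> (\<lambda>x. x) \<in> measurable M (F t)"
  using subalg[of t] unfolding subalgebra_def
  by (intro measurableI) auto

lemma prog_meas:
  assumes "progressive F T u"
  shows "(\<lambda>(s, \<omega>). u s \<omega>) \<in> borel_measurable (L \<Otimes>\<^sub>M M)"
proof -
  have m: "(\<lambda>(s, \<omega>). u s \<omega>) \<in> borel_measurable (L \<Otimes>\<^sub>M F T)"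
    using assms T_pos unfolding progressive_def by auto
  have "(\<lambda>z. (fst z, snd z)) \<in> measurable (L \<Otimes>\<^sub>M M) (L \<Otimes>\<^sub>M F T)"
    by (intro measurable_Pair measurable_fst'' measurable_compose[OF measurable_snd id_meas[of T]])
       (use T_pos in auto)
  from measurable_compose[OF this m] show ?thesis by (simp add: case_prod_beta)
qed

lemma prog_meas_sec:
  assumes "progressive F T u" "t \<in> {0..T}"
  shows "(\<lambda>\<omega>. u t \<omega>) \<in> borel_measurable (F t)"
proof -
  have m: "(\<lambda>(s, \<omega>). u s \<omega>) \<in> borel_measurable (restrict_space lborel {0..t} \<Otimes>\<^sub>M F t)"
    using assms unfolding progressive_def by auto
  have "(\<lambda>\<omega>. (t, \<omega>)) \<in> measurable (F t) (restrict_space lborel {0..t} \<Otimes>\<^sub>M F t)"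
    using assms(2) by (intro measurable_Pair) (auto simp: space_restrict_space)
  from measurable_compose[OF this m] show ?thesis by simp
qed

lemma prog_meas_secM:
  assumes "progressive F T u" "t \<in> {0..T}"
  shows "(\<lambda>\<omega>. u t \<omega>) \<in> borel_measurable M"
  using measurable_compose[OF id_meas[OF assms(2)] prog_meas_sec[OF assms]] by simp

lemma AE_lift:
  assumes "AE \<omega> in M. P \<omega>"
  shows "AE z in L \<Otimes>\<^sub>M M. P (snd z)"
proof -
  obtain S where S: "S \<in> sets M" "emeasure M S = 0" "{\<omega>\<in>space M. \<not> P \<omega>} \<subseteq> S"
    using assms by (auto elim!: AE_E)
  have "emeasure (L \<Otimes>\<^sub>M M) (space L \<times> S) = emeasure L (space L) * emeasure M S"
    using S sets.top[of L] by (intro PS.M2.emeasure_pair_measure_Times) auto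
  then have "emeasure (L \<Otimes>\<^sub>M M) (space L \<times> S) = 0" using S by simp
  moreover have "space L \<times> S \<in> sets (L \<Otimes>\<^sub>M M)" using S sets.top[of L] by (intro pair_measureI) auto
  moreover have "{z\<in>space (L \<Otimes>\<^sub>M M). \<not> P (snd z)} \<subseteq> space L \<times> S"
    using S by (auto simp: space_pair_measure)
  ultimately show ?thesis by (intro AE_I) auto
qed


lemma L2D:
  assumes "u \<in> L2 M F T"
  shows "progressive F T u" "(\<lambda>(s, \<omega>). u s \<omega>) \<in> borel_measurable (L \<Otimes>\<^sub>M M)"
    "integrable (L \<Otimes>\<^sub>M M) (\<lambda>(s, \<omega>). (u s \<omega>)\<^sup>2)"
  using assms prog_meas by (auto simp: L2_def PM_def)

lemma L2_meas':
  "u \<in> L2 M F T \<Longrightarrow> f \<in> measurable X (L \<Otimes>\<^sub>M M) \<Longrightarrow> (\<lambda>x. u (fst (f x)) (snd (f x))) \<in> borel_measurable X"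
  using measurable_compose[OF _ L2D(2)] by (simp add: case_prod_beta)

lemma abs_le_1_sq: "\<bar>x::real\<bar> \<le> 1 + x\<^sup>2"
proof (cases "\<bar>x\<bar> \<le> 1")
  case True
  moreover have "0 \<le> x\<^sup>2" by simp
  ultimately show ?thesis by linarith
next
  case False
  then have "\<bar>x\<bar> * 1 \<le> \<bar>x\<bar> * \<bar>x\<bar>" by (intro mult_left_mono) auto
  moreover have "x\<^sup>2 = \<bar>x\<bar> * \<bar>x\<bar>" by (simp add: power2_eq_square abs_mult_self_eq)
  ultimately show ?thesis by linarith
qed

lemma two_ab_le: "2 * \<bar>a::real\<bar> * \<bar>b\<bar> \<le> a\<^sup>2 + b\<^sup>2"
proof -
  have "0 \<le> (\<bar>a\<bar> - \<bar>b\<bar>)\<^sup>2" by simp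
  then show ?thesis by (simp add: power2_diff)
qed

lemma sum_sq_le: "(a * x + b * y)\<^sup>2 \<le> 2 * a\<^sup>2 * x\<^sup>2 + 2 * b\<^sup>2 * (y::real)\<^sup>2"
proof -
  have "0 \<le> (a * x - b * y)\<^sup>2" by simp
  then show ?thesis by (simp add: power2_sum power2_diff power_mult_distrib)
qed

lemma norm_le_of: "0 \<le> x \<Longrightarrow> x \<le> y \<Longrightarrow> norm x \<le> norm (y::real)" by simp

lemma int_sq_imp_int:
  fixes f :: "_ \<Rightarrow> real"
  assumes "finite_measure Q" "integrable Q (\<lambda>x. (f x)\<^sup>2)" "f \<in> borel_measurable Q"
  shows "integrable Q f"
proof -
  interpret finite_measure Q by fact
  have "integrable Q (\<lambda>x. 1 + (f x)\<^sup>2)" using assms by auto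
  then show ?thesis
  proof (rule Bochner_Integration.integrable_bound)
    show "AE x in Q. norm (f x) \<le> norm (1 + (f x)\<^sup>2)"
      using abs_le_1_sq by (intro AE_I2) (simp add: add_nonneg_nonneg)
  qed fact
qed

lemma int_prod:
  fixes f g :: "_ \<Rightarrow> real"
  assumes "integrable Q (\<lambda>x. (f x)\<^sup>2)" "integrable Q (\<lambda>x. (g x)\<^sup>2)"
    "f \<in> borel_measurable Q" "g \<in> borel_measurable Q"
  shows "integrable Q (\<lambda>x. f x * g x)"
proof -
  have "integrable Q (\<lambda>x. (f x)\<^sup>2 + (g x)\<^sup>2)" using assms by auto
  then show ?thesis
  proof (rule Bochner_Integration.integrable_bound)
    show "AE x in Q. norm (f x * g x) \<le> norm ((f x)\<^sup>2 + (g x)\<^sup>2)"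
    proof (intro AE_I2)
      fix x
      have "2 * \<bar>f x\<bar> * \<bar>g x\<bar> \<le> (f x)\<^sup>2 + (g x)\<^sup>2"
        by (rule two_ab_le)
      moreover have "0 \<le> \<bar>f x\<bar> * \<bar>g x\<bar>" by simp
      ultimately have "\<bar>f x\<bar> * \<bar>g x\<bar> \<le> (f x)\<^sup>2 + (g x)\<^sup>2" by linarith
      then show "norm (f x * g x) \<le> norm ((f x)\<^sup>2 + (g x)\<^sup>2)"
        by (simp add: abs_mult)
    qed
  qed (use assms in auto)
qed

lemma progressive_lin:
  assumes "progressive F T u" "progressive F T v"
  shows "progressive F T (\<lambda>t \<omega>. a * u t \<omega> + b * v t \<omega>)"
  using assms unfolding progressive_def
proof (intro ballI)
  fix t assume t: "t \<in> {0..T}" and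
    u: "\<forall>t\<in>{0..T}. (\<lambda>(s, \<omega>). u s \<omega>) \<in> borel_measurable (restrict_space lborel {0..t} \<Otimes>\<^sub>M F t)" and
    v: "\<forall>t\<in>{0..T}. (\<lambda>(s, \<omega>). v s \<omega>) \<in> borel_measurable (restrict_space lborel {0..t} \<Otimes>\<^sub>M F t)"
  have [measurable]: "(\<lambda>(s, \<omega>). u s \<omega>) \<in> borel_measurable (restrict_space lborel {0..t} \<Otimes>\<^sub>M F t)"
     "(\<lambda>(s, \<omega>). v s \<omega>) \<in> borel_measurable (restrict_space lborel {0..t} \<Otimes>\<^sub>M F t)"
    using u v t by auto
  show "(\<lambda>(s, \<omega>). a * u s \<omega> + b * v s \<omega>) \<in> borel_measurable (restrict_space lborel {0..t} \<Otimes>\<^sub>M F t)"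
    unfolding case_prod_beta' by measurable
qed

lemma L2_lin:
  assumes "u \<in> L2 M F T" "v \<in> L2 M F T"
  shows "(\<lambda>t \<omega>. a * u t \<omega> + b * v t \<omega>) \<in> L2 M F T"
proof -
  have p: "progressive F T (\<lambda>t \<omega>. a * u t \<omega> + b * v t \<omega>)"
    using progressive_lin L2D(1) assms by blast
  have mu[measurable]: "(\<lambda>(s, \<omega>). u s \<omega>) \<in> borel_measurable (L \<Otimes>\<^sub>M M)"
   and mv[measurable]: "(\<lambda>(s, \<omega>). v s \<omega>) \<in> borel_measurable (L \<Otimes>\<^sub>M M)" using L2D assms by auto
  have "integrable (L \<Otimes>\<^sub>M M) (\<lambda>z. 2 * a\<^sup>2 * (case z of (s, \<omega>) \<Rightarrow> (u s \<omega>)\<^sup>2) + 2 * b\<^sup>2 * (case z of (s, \<omega>) \<Rightarrow> (v s \<omega>)\<^sup>2))"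
    using L2D(3)[OF assms(1)] L2D(3)[OF assms(2)] by auto
  then have "integrable (L \<Otimes>\<^sub>M M) (\<lambda>(s, \<omega>). (a * u s \<omega> + b * v s \<omega>)\<^sup>2)"
  proof (rule Bochner_Integration.integrable_bound)
    show "(\<lambda>(s, \<omega>). (a * u s \<omega> + b * v s \<omega>)\<^sup>2) \<in> borel_measurable (L \<Otimes>\<^sub>M M)"
    proof -
      have mu': "(\<lambda>z. u (fst z) (snd z)) \<in> borel_measurable (L \<Otimes>\<^sub>M M)" using mu by (simp add: case_prod_beta')
      have mv': "(\<lambda>z. v (fst z) (snd z)) \<in> borel_measurable (L \<Otimes>\<^sub>M M)" using mv by (simp add: case_prod_beta')
      have "(\<lambda>z. (a * u (fst z) (snd z) + b * v (fst z) (snd z))\<^sup>2) \<in> borel_measurable (L \<Otimes>\<^sub>M M)"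
        using mu' mv' by measurable
      then show ?thesis by (simp add: case_prod_beta')
    qed
    show "AE x in L \<Otimes>\<^sub>M M. norm (case x of (s, \<omega>) \<Rightarrow> (a * u s \<omega> + b * v s \<omega>)\<^sup>2)
        \<le> norm (2 * a\<^sup>2 * (case x of (s, \<omega>) \<Rightarrow> (u s \<omega>)\<^sup>2) + 2 * b\<^sup>2 * (case x of (s, \<omega>) \<Rightarrow> (v s \<omega>)\<^sup>2))"
    proof (intro AE_I2)
      fix z :: "real \<times> 'a"
      obtain s \<omega> where z: "z = (s, \<omega>)" by (cases z)
      show "norm (case z of (s, \<omega>) \<Rightarrow> (a * u s \<omega> + b * v s \<omega>)\<^sup>2)
        \<le> norm (2 * a\<^sup>2 * (case z of (s, \<omega>) \<Rightarrow> (u s \<omega>)\<^sup>2) + 2 * b\<^sup>2 * (case z of (s, \<omega>) \<Rightarrow> (v s \<omega>)\<^sup>2))"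
        unfolding z using sum_sq_le[of a "u s \<omega>" b "v s \<omega>"] by (intro norm_le_of) auto
    qed
  qed
  with p show ?thesis by (simp add: L2_def PM_def)
qed

lemma L2_padd: "u \<in> L2 M F T \<Longrightarrow> v \<in> L2 M F T \<Longrightarrow> padd (pscale a u) (pscale b v) \<in> L2 M F T"
  using L2_lin[of u v a b] by (simp add: padd_def pscale_def)

lemma L2_pdiff: "u \<in> L2 M F T \<Longrightarrow> v \<in> L2 M F T \<Longrightarrow> pdiff u v \<in> L2 M F T"
  using L2_lin[of u v 1 "-1"] by (simp add: pdiff_def)

lemma L2_AE:
  assumes "u \<in> L2 M F T"
  shows "AE \<omega> in M. integrable L (\<lambda>s. (u s \<omega>)\<^sup>2) \<and> integrable L (\<lambda>s. u s \<omega>)"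
proof -
  have A: "AE \<omega> in M. integrable L (\<lambda>s. (u s \<omega>)\<^sup>2)"
    using PS.AE_integrable_snd[of "\<lambda>s \<omega>. (u s \<omega>)\<^sup>2"] L2D(3)[OF assms] by simp
  have m: "\<And>\<omega>. \<omega> \<in> space M \<Longrightarrow> (\<lambda>s. u s \<omega>) \<in> borel_measurable L"
    using L2D(2)[OF assms] by (simp add: measurable_Pair1' case_prod_beta)
  show ?thesis
    using A AE_space by eventually_elim (auto intro: int_sq_imp_int[OF finL] m)
qed

end

context fsetting begin

definition kern_ok :: "(real \<Rightarrow> real \<Rightarrow> real) \<Rightarrow> real \<Rightarrow> bool" where
  "kern_ok K C \<longleftrightarrow> (\<lambda>(t, s). K t s) \<in> borel_measurable (lborel \<Otimes>\<^sub>M lborel) \<and>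
     (\<forall>t\<in>{0..T}. (\<integral>\<^sup>+ s. ennreal ((K t s)\<^sup>2) * indicator {0..t} s \<partial>lborel) \<le> ennreal C)"

lemma id_L_borel[measurable]: "(\<lambda>x::real. x) \<in> borel_measurable L"
  by (rule measurable_restrict_space1) simp

lemma kern_LL:
  assumes "(\<lambda>(t, s). K t s) \<in> borel_measurable (lborel \<Otimes>\<^sub>M lborel)"
  shows "(\<lambda>(t, s). K t s) \<in> borel_measurable (L \<Otimes>\<^sub>M L)"
proof -
  have a: "fst \<in> measurable (L \<Otimes>\<^sub>M L) borel"
    using measurable_compose[OF measurable_fst id_L_borel] by simp
  have b: "snd \<in> measurable (L \<Otimes>\<^sub>M L) borel"
    using measurable_compose[OF measurable_snd id_L_borel] by simp
  have "(\<lambda>z. (fst z, snd z)) \<in> measurable (L \<Otimes>\<^sub>M L) (lborel \<Otimes>\<^sub>M lborel)"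
    by (intro measurable_Pair) (simp_all add: a b)
  from measurable_compose[OF this assms] show ?thesis by (simp add: case_prod_beta)
qed

lemma volt_L:
  assumes "t \<in> {0..T}"
  shows "volt K u t \<omega> = (\<integral>s. indicator {0..t} s * K t s * u s \<omega> \<partial>L)"
proof -
  have "(\<integral>s. indicator {0..t} s * K t s * u s \<omega> \<partial>L)
      = (\<integral>s. indicator {0..T} s *\<^sub>R (indicator {0..t} s * K t s * u s \<omega>) \<partial>lborel)"
    by (rule integral_restrict_space) simp
  also have "\<dots> = (\<integral>s. indicator {0..t} s *\<^sub>R (K t s * u s \<omega>) \<partial>lborel)"
    using assms by (intro Bochner_Integration.integral_cong) (auto split: split_indicator)
  finally show ?thesis by (simp add: volt_def set_lebesgue_integral_def)
qed

lemma fst_borel_LM[measurable]: "(\<lambda>z. fst z) \<in> borel_measurable (L \<Otimes>\<^sub>M M)"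
  by (rule measurable_compose[OF measurable_fst id_L_borel])

lemma volt_meas:
  assumes K: "kern_ok K C" and u: "(\<lambda>(s, \<omega>). u s \<omega>) \<in> borel_measurable (L \<Otimes>\<^sub>M M)"
  shows "(\<lambda>(t, \<omega>). volt K u t \<omega>) \<in> borel_measurable (L \<Otimes>\<^sub>M M)"
proof -
  have [measurable]: "(\<lambda>(t, s). K t s) \<in> borel_measurable (L \<Otimes>\<^sub>M L)"
    using K kern_LL unfolding kern_ok_def by blast
  note u[measurable]
  have "(\<lambda>(z, s). indicator {0..fst z} s * K (fst z) s * u s (snd z)) \<in> borel_measurable ((L \<Otimes>\<^sub>M M) \<Otimes>\<^sub>M L)"
  proof -
    have e: "(\<lambda>(z, s). indicator {0..fst z} s * K (fst z) s * u s (snd z)) =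
      (\<lambda>p. (if 0 \<le> snd p \<and> snd p \<le> fst (fst p) then 1 else 0) * K (fst (fst p)) (snd p) * u (snd p) (snd (fst p)))"
      by (auto simp: fun_eq_iff split: split_indicator)
    have [measurable]: "(\<lambda>p. fst (fst p)) \<in> borel_measurable ((L \<Otimes>\<^sub>M M) \<Otimes>\<^sub>M L)"
      by (rule measurable_compose[OF measurable_fst fst_borel_LM])
    have [measurable]: "(\<lambda>p. snd p) \<in> borel_measurable ((L \<Otimes>\<^sub>M M) \<Otimes>\<^sub>M L)"
      by (rule measurable_compose[OF measurable_snd id_L_borel])
    show ?thesis unfolding e by measurable
  qed
  then have "(\<lambda>z. \<integral>s. indicator {0..fst z} s * K (fst z) s * u s (snd z) \<partial>L) \<in> borel_measurable (L \<Otimes>\<^sub>M M)"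
    by (rule PS.M1.borel_measurable_lebesgue_integral)
  then show ?thesis
    by (rule measurable_cong[THEN iffD1, rotated])
       (auto simp: space_pair_measure volt_L)
qed


lemma sec_meas:
  assumes "(\<lambda>(s, \<omega>). u s \<omega>) \<in> borel_measurable (L \<Otimes>\<^sub>M M)" "\<omega> \<in> space M"
  shows "(\<lambda>s. u s \<omega>) \<in> borel_measurable L"
  using measurable_compose[OF measurable_Pair2'[of \<omega> M L] assms(1)] assms(2) by simp

lemma kern_sec:
  assumes "kern_ok K C"
  shows "(\<lambda>s. K t s) \<in> borel_measurable L"
proof -
  have "(\<lambda>(t, s). K t s) \<in> borel_measurable (L \<Otimes>\<^sub>M L)"
    using assms kern_LL unfolding kern_ok_def by blast
  then have "(\<lambda>s. K t s) \<in> borel_measurable lborel"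
    using measurable_compose[OF measurable_Pair1'[of t lborel lborel]] assms
    unfolding kern_ok_def by (auto simp: case_prod_beta)
  then show ?thesis by (rule measurable_restrict_space1)
qed

lemma kern_sq_nn:
  assumes "kern_ok K C" "t \<in> {0..T}"
  shows "(\<integral>\<^sup>+ s. ennreal ((K t s)\<^sup>2) * indicator {0..t} s \<partial>L) \<le> ennreal C"
proof -
  have "(\<integral>\<^sup>+ s. ennreal ((K t s)\<^sup>2) * indicator {0..t} s \<partial>L)
      = (\<integral>\<^sup>+ s. ennreal ((K t s)\<^sup>2) * indicator {0..t} s * indicator {0..T} s \<partial>lborel)"
    by (rule nn_integral_restrict_space) simp
  also have "\<dots> = (\<integral>\<^sup>+ s. ennreal ((K t s)\<^sup>2) * indicator {0..t} s \<partial>lborel)"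
    using assms(2) by (intro nn_integral_cong) (auto split: split_indicator)
  also have "\<dots> \<le> ennreal C" using assms unfolding kern_ok_def by auto
  finally show ?thesis .
qed

lemma volt_bound:
  assumes K: "kern_ok K C" and um: "(\<lambda>s. u s \<omega>) \<in> borel_measurable L" and t: "t \<in> {0..T}"
  shows "ennreal ((volt K u t \<omega>)\<^sup>2) \<le> ennreal C * (\<integral>\<^sup>+ s. ennreal ((u s \<omega>)\<^sup>2) \<partial>L)"
proof -
  have Km[measurable]: "(\<lambda>s. K t s) \<in> borel_measurable L" by (rule kern_sec[OF K])
  note um[measurable]
  define f where "f s = ennreal \<bar>K t s\<bar> * indicator {0..t} s" for s
  define g where "g s = ennreal \<bar>u s \<omega>\<bar>" for s
  have fm[measurable]: "f \<in> borel_measurable L" unfolding f_def by measurable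
  have gm[measurable]: "g \<in> borel_measurable L" unfolding g_def by measurable
  have 1: "ennreal \<bar>volt K u t \<omega>\<bar> \<le> (\<integral>\<^sup>+ s. f s * g s \<partial>L)"
  proof -
    have "ennreal \<bar>volt K u t \<omega>\<bar> \<le> (\<integral>\<^sup>+ s. norm (indicator {0..t} s * K t s * u s \<omega>) \<partial>L)"
      using norm_integral_le_nn[of L "\<lambda>s. indicator {0..t} s * K t s * u s \<omega>"] t
      by (simp add: volt_L)
    also have "\<dots> = (\<integral>\<^sup>+ s. f s * g s \<partial>L)"
      by (intro nn_integral_cong) (auto simp: f_def g_def abs_mult ennreal_mult split: split_indicator)
    finally show ?thesis .
  qed
  have 2: "(\<integral>\<^sup>+ s. f s * g s \<partial>L)\<^sup>2 \<le> (\<integral>\<^sup>+ s. f s ^ 2 \<partial>L) * (\<integral>\<^sup>+ s. g s ^ 2 \<partial>L)"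
    by (rule Cauchy_Schwarz_nn_integral) (simp_all)
  have 3: "(\<integral>\<^sup>+ s. f s ^ 2 \<partial>L) \<le> ennreal C"
  proof -
    have "(\<integral>\<^sup>+ s. f s ^ 2 \<partial>L) = (\<integral>\<^sup>+ s. ennreal ((K t s)\<^sup>2) * indicator {0..t} s \<partial>L)"
      by (intro nn_integral_cong) (auto simp: f_def ennreal_power split: split_indicator)
    also have "\<dots> \<le> ennreal C" by (rule kern_sq_nn[OF K t])
    finally show ?thesis .
  qed
  have 4: "(\<integral>\<^sup>+ s. g s ^ 2 \<partial>L) = (\<integral>\<^sup>+ s. ennreal ((u s \<omega>)\<^sup>2) \<partial>L)"
    by (intro nn_integral_cong) (auto simp: g_def ennreal_power)
  have "ennreal ((volt K u t \<omega>)\<^sup>2) = (ennreal \<bar>volt K u t \<omega>\<bar>)\<^sup>2"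
    by (simp add: ennreal_power)
  also have "\<dots> \<le> (\<integral>\<^sup>+ s. f s * g s \<partial>L)\<^sup>2"
    using 1 by (intro power_mono) auto
  also have "\<dots> \<le> (\<integral>\<^sup>+ s. f s ^ 2 \<partial>L) * (\<integral>\<^sup>+ s. g s ^ 2 \<partial>L)" by (rule 2)
  also have "\<dots> \<le> ennreal C * (\<integral>\<^sup>+ s. g s ^ 2 \<partial>L)"
    using 3 by (intro mult_right_mono) auto
  finally show ?thesis using 4 by simp
qed

lemma H_meas:
  assumes [measurable]: "(\<lambda>(s, \<omega>). u s \<omega>) \<in> borel_measurable (L \<Otimes>\<^sub>M M)"
  shows "(\<lambda>\<omega>. \<integral>\<^sup>+ s. ennreal ((u s \<omega>)\<^sup>2) \<partial>L) \<in> borel_measurable M"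
proof (rule PS.M1.borel_measurable_nn_integral)
  show "(\<lambda>(\<omega>, s). ennreal ((u s \<omega>)\<^sup>2)) \<in> borel_measurable (M \<Otimes>\<^sub>M L)" by measurable
qed

lemma nn_snd_const:
  assumes [measurable]: "H \<in> borel_measurable M"
  shows "(\<integral>\<^sup>+ z. H (snd z) \<partial>(L \<Otimes>\<^sub>M M)) = ennreal T * (\<integral>\<^sup>+ \<omega>. H \<omega> \<partial>M)"
proof -
  have "(\<integral>\<^sup>+ z. H (snd z) \<partial>(L \<Otimes>\<^sub>M M)) = (\<integral>\<^sup>+ t. \<integral>\<^sup>+ \<omega>. H \<omega> \<partial>M \<partial>L)"
    by (subst PS.M2.nn_integral_fst[symmetric]) auto
  also have "\<dots> = ennreal T * (\<integral>\<^sup>+ \<omega>. H \<omega> \<partial>M)"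
    using emL by (simp add: mult.commute)
  finally show ?thesis .
qed

lemma L2_nn_fin:
  assumes "u \<in> L2 M F T"
  shows "(\<integral>\<^sup>+ \<omega>. (\<integral>\<^sup>+ s. ennreal ((u s \<omega>)\<^sup>2) \<partial>L) \<partial>M) < \<infinity>"
proof -
  note m[measurable] = L2D(2)[OF assms]
  have "(\<integral>\<^sup>+ \<omega>. (\<integral>\<^sup>+ s. ennreal ((u s \<omega>)\<^sup>2) \<partial>L) \<partial>M) = (\<integral>\<^sup>+ z. ennreal ((\<lambda>(s, \<omega>). (u s \<omega>)\<^sup>2) z) \<partial>(L \<Otimes>\<^sub>M M))"
    by (subst PS.nn_integral_snd[symmetric]) (auto simp: case_prod_beta)
  also have "\<dots> < \<infinity>"
    using L2D(3)[OF assms] unfolding integrable_iff_bounded by (simp add: case_prod_beta)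
  finally show ?thesis .
qed

lemma volt_sq_int:
  assumes K: "kern_ok K C" and u: "u \<in> L2 M F T"
  shows "integrable (L \<Otimes>\<^sub>M M) (\<lambda>(t, \<omega>). (volt K u t \<omega>)\<^sup>2)"
  unfolding integrable_iff_bounded
proof
  note um = L2D(2)[OF u]
  have vm: "(\<lambda>(t, \<omega>). volt K u t \<omega>) \<in> borel_measurable (L \<Otimes>\<^sub>M M)"
    by (rule volt_meas[OF K um])
  note Hm = H_meas[OF um]
  show "(\<lambda>(t, \<omega>). (volt K u t \<omega>)\<^sup>2) \<in> borel_measurable (L \<Otimes>\<^sub>M M)"
    using borel_measurable_power[OF vm, of 2] by (simp add: case_prod_beta)
  have "(\<integral>\<^sup>+ z. ennreal (norm ((\<lambda>(t, \<omega>). (volt K u t \<omega>)\<^sup>2) z)) \<partial>(L \<Otimes>\<^sub>M M))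
      \<le> (\<integral>\<^sup>+ z. ennreal C * (\<integral>\<^sup>+ s. ennreal ((u s (snd z))\<^sup>2) \<partial>L) \<partial>(L \<Otimes>\<^sub>M M))"
  proof (intro nn_integral_mono)
    fix z assume "z \<in> space (L \<Otimes>\<^sub>M M)"
    then obtain t \<omega> where z: "z = (t, \<omega>)" "t \<in> {0..T}" "\<omega> \<in> space M"
      by (auto simp: space_pair_measure)
    show "ennreal (norm ((\<lambda>(t, \<omega>). (volt K u t \<omega>)\<^sup>2) z)) \<le> ennreal C * (\<integral>\<^sup>+ s. ennreal ((u s (snd z))\<^sup>2) \<partial>L)"
      using volt_bound[of K C u \<omega> t, OF K sec_meas[OF um z(3)] z(2)] z(1) by simp
  qed
  also have "\<dots> = ennreal C * (\<integral>\<^sup>+ z. (\<integral>\<^sup>+ s. ennreal ((u s (snd z))\<^sup>2) \<partial>L) \<partial>(L \<Otimes>\<^sub>M M))"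
    by (rule nn_integral_cmult) (rule measurable_compose[OF measurable_snd Hm])
  also have "\<dots> = ennreal C * (ennreal T * (\<integral>\<^sup>+ \<omega>. (\<integral>\<^sup>+ s. ennreal ((u s \<omega>)\<^sup>2) \<partial>L) \<partial>M))"
    by (simp add: nn_snd_const[OF Hm])
  also have "\<dots> < \<infinity>"
    using L2_nn_fin[OF u] by (simp add: ennreal_mult_less_top)
  finally show "(\<integral>\<^sup>+ z. ennreal (norm ((\<lambda>(t, \<omega>). (volt K u t \<omega>)\<^sup>2) z)) \<partial>(L \<Otimes>\<^sub>M M)) < \<infinity>" .
qed

lemma kern_int:
  assumes K: "kern_ok K C" and t: "t \<in> {0..T}"
  shows "integrable L (\<lambda>s. (indicator {0..t} s * K t s)\<^sup>2)"
  unfolding integrable_iff_bounded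
proof
  have [measurable]: "(\<lambda>s. K t s) \<in> borel_measurable L" by (rule kern_sec[OF K])
  show "(\<lambda>s. (indicator {0..t} s * K t s)\<^sup>2) \<in> borel_measurable L" by measurable
  have "(\<integral>\<^sup>+ s. ennreal (norm ((indicator {0..t} s * K t s)\<^sup>2)) \<partial>L) = (\<integral>\<^sup>+ s. ennreal ((K t s)\<^sup>2) * indicator {0..t} s \<partial>L)"
    by (intro nn_integral_cong) (auto split: split_indicator)
  also have "\<dots> \<le> ennreal C" by (rule kern_sq_nn[OF K t])
  finally show "(\<integral>\<^sup>+ s. ennreal (norm ((indicator {0..t} s * K t s)\<^sup>2)) \<partial>L) < \<infinity>"
    by (metis ennreal_less_top infinity_ennreal_def le_less_trans)
qed

lemma kern_u_int:
  assumes K: "kern_ok K C" and t: "t \<in> {0..T}" and um: "(\<lambda>s. u s \<omega>) \<in> borel_measurable L"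
    and ui: "integrable L (\<lambda>s. (u s \<omega>)\<^sup>2)"
  shows "integrable L (\<lambda>s. indicator {0..t} s * K t s * u s \<omega>)"
proof -
  have [measurable]: "(\<lambda>s. K t s) \<in> borel_measurable L" by (rule kern_sec[OF K])
  have "integrable L (\<lambda>s. (indicator {0..t} s * K t s) * u s \<omega>)"
    by (rule int_prod[OF kern_int[OF K t] ui]) (use um in measurable)
  then show ?thesis by simp
qed

lemma volt_lin:
  assumes K: "kern_ok K C" and t: "t \<in> {0..T}"
    and um: "(\<lambda>s. u s \<omega>) \<in> borel_measurable L" and ui: "integrable L (\<lambda>s. (u s \<omega>)\<^sup>2)"
    and vm: "(\<lambda>s. v s \<omega>) \<in> borel_measurable L" and vi: "integrable L (\<lambda>s. (v s \<omega>)\<^sup>2)"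
  shows "volt K (\<lambda>t \<omega>. a * u t \<omega> + b * v t \<omega>) t \<omega> = a * volt K u t \<omega> + b * volt K v t \<omega>"
proof -
  have iu: "integrable L (\<lambda>s. indicator {0..t} s * K t s * u s \<omega>)" by (rule kern_u_int[of K C t u \<omega>, OF K t um ui])
  have iv: "integrable L (\<lambda>s. indicator {0..t} s * K t s * v s \<omega>)" by (rule kern_u_int[of K C t v \<omega>, OF K t vm vi])
  have "volt K (\<lambda>t \<omega>. a * u t \<omega> + b * v t \<omega>) t \<omega>
     = (\<integral>s. a * (indicator {0..t} s * K t s * u s \<omega>) + b * (indicator {0..t} s * K t s * v s \<omega>) \<partial>L)"
    using t by (simp add: volt_L algebra_simps)
  also have "\<dots> = a * volt K u t \<omega> + b * volt K v t \<omega>"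
    using iu iv t by (simp add: volt_L)
  finally show ?thesis .
qed

end

context fsetting begin

sublocale LL: pair_sigma_finite L L
proof -
  interpret A: finite_measure L by (rule finL)
  show "pair_sigma_finite L L" by unfold_locales
qed

lemma fst_LL[measurable]: "(\<lambda>z. fst z) \<in> borel_measurable (L \<Otimes>\<^sub>M L)"
  by (rule measurable_compose[OF measurable_fst id_L_borel])
lemma snd_LL[measurable]: "(\<lambda>z. snd z) \<in> borel_measurable (L \<Otimes>\<^sub>M L)"
  by (rule measurable_compose[OF measurable_snd id_L_borel])

lemma AE_L_neq: "AE s in L. s \<noteq> t"
proof -
  have "AE s in lborel. s \<noteq> t"
    by (rule AE_I'[of "{t}"]) auto
  then show ?thesis by (subst AE_restrict_space_iff) (auto elim: AE_mp)
qed

lemma prod_int_LL: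
  fixes g :: "real \<Rightarrow> real"
  assumes g: "integrable L g"
    and c: "(\<lambda>(t, s). c t s) \<in> borel_measurable (L \<Otimes>\<^sub>M L)" and cb: "\<And>t s. \<bar>c t s\<bar> \<le> 1"
  shows "integrable (L \<Otimes>\<^sub>M L) (\<lambda>(t, s). g t * g s * c t s)"
  unfolding integrable_iff_bounded
proof
  have gm[measurable]: "g \<in> borel_measurable L" using g by auto
  note c[measurable]
  show "(\<lambda>(t, s). g t * g s * c t s) \<in> borel_measurable (L \<Otimes>\<^sub>M L)" by measurable
  have "(\<integral>\<^sup>+ z. ennreal (norm ((\<lambda>(t, s). g t * g s * c t s) z)) \<partial>(L \<Otimes>\<^sub>M L))
     \<le> (\<integral>\<^sup>+ z. ennreal \<bar>g (fst z)\<bar> * ennreal \<bar>g (snd z)\<bar> \<partial>(L \<Otimes>\<^sub>M L))"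
  proof (intro nn_integral_mono)
    fix z :: "real \<times> real"
    have "\<bar>g (fst z)\<bar> * \<bar>g (snd z)\<bar> * \<bar>c (fst z) (snd z)\<bar> \<le> \<bar>g (fst z)\<bar> * \<bar>g (snd z)\<bar> * 1"
      using cb by (intro mult_left_mono) auto
    then show "ennreal (norm ((\<lambda>(t, s). g t * g s * c t s) z)) \<le> ennreal \<bar>g (fst z)\<bar> * ennreal \<bar>g (snd z)\<bar>"
      by (cases z) (simp add: abs_mult ennreal_mult[symmetric] ennreal_leI)
  qed
  also have "\<dots> = (\<integral>\<^sup>+ t. \<integral>\<^sup>+ s. ennreal \<bar>g t\<bar> * ennreal \<bar>g s\<bar> \<partial>L \<partial>L)"
    by (subst PS.M1.nn_integral_fst[symmetric]) auto
  also have "\<dots> = (\<integral>\<^sup>+ t. ennreal \<bar>g t\<bar> * (\<integral>\<^sup>+ s. ennreal \<bar>g s\<bar> \<partial>L) \<partial>L)"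
    by (intro nn_integral_cong nn_integral_cmult) auto
  also have "\<dots> = (\<integral>\<^sup>+ t. ennreal \<bar>g t\<bar> \<partial>L) * (\<integral>\<^sup>+ s. ennreal \<bar>g s\<bar> \<partial>L)"
    by (rule nn_integral_multc) auto
  also have "\<dots> < \<infinity>"
    using g unfolding integrable_iff_bounded by (simp add: ennreal_mult_less_top)
  finally show "(\<integral>\<^sup>+ z. ennreal (norm ((\<lambda>(t, s). g t * g s * c t s) z)) \<partial>(L \<Otimes>\<^sub>M L)) < \<infinity>" .
qed

definition Yf :: "(real \<Rightarrow> real) \<Rightarrow> real \<Rightarrow> real" where
  "Yf f t = (\<integral>s. indicator {..<t} s * f s \<partial>L)"

lemma Yf_meas:
  assumes [measurable]: "f \<in> borel_measurable L"
  shows "Yf f \<in> borel_measurable L"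
proof -
  have "(\<lambda>(t, s). indicator {..<t} s * f s) \<in> borel_measurable (L \<Otimes>\<^sub>M L)"
  proof -
    have e: "(\<lambda>(t, s). indicator {..<t} s * f s) = (\<lambda>z. (if snd z < fst z then 1 else 0) * f (snd z))"
      by (auto simp: fun_eq_iff split: split_indicator)
    show ?thesis unfolding e by measurable
  qed
  then show ?thesis unfolding Yf_def
    by (rule PS.M1.borel_measurable_lebesgue_integral)
qed

lemma Yf_bound:
  assumes "integrable L f"
  shows "\<bar>Yf f t\<bar> \<le> (\<integral>s. \<bar>f s\<bar> \<partial>L)"
proof -
  have "\<bar>Yf f t\<bar> \<le> (\<integral>s. \<bar>indicator {..<t} s * f s\<bar> \<partial>L)"
    unfolding Yf_def by (rule integral_abs_bound)
  also have "\<dots> \<le> (\<integral>s. \<bar>f s\<bar> \<partial>L)"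
  proof (intro integral_mono)
    have [measurable]: "f \<in> borel_measurable L" using assms by auto
    show "integrable L (\<lambda>s. \<bar>indicator {..<t} s * f s\<bar>)"
      by (rule Bochner_Integration.integrable_bound[OF integrable_abs[OF assms]])
         (auto split: split_indicator)
  qed (use assms in \<open>auto split: split_indicator\<close>)
  finally show ?thesis .
qed


lemma ind_int:
  fixes g :: "real \<Rightarrow> real"
  assumes "integrable L g" "A \<in> sets borel"
  shows "integrable L (\<lambda>s. indicator A s * g s)"
proof (rule Bochner_Integration.integrable_bound[OF assms(1)])
  have [measurable]: "g \<in> borel_measurable L" using assms by auto
  have [measurable]: "(\<lambda>s. indicator A s :: real) \<in> borel_measurable L"
    using measurable_compose[OF id_L_borel borel_measurable_indicator[OF assms(2)]] by simp
  show "(\<lambda>s. indicator A s * g s) \<in> borel_measurable L" by measurable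
qed (auto split: split_indicator)

lemma tri:
  fixes f :: "real \<Rightarrow> real"
  assumes f: "integrable L f"
  shows "(\<integral>t. indicator {..r} t * f t * Yf f t \<partial>L) = (\<integral>s. indicator {..r} s * f s \<partial>L)\<^sup>2 / 2"
proof -
  have fm[measurable]: "f \<in> borel_measurable L" using f by auto
  define g where "g s = indicator {..r} s * f s" for s
  have gi: "integrable L g" unfolding g_def by (rule ind_int[OF f]) simp
  have gm[measurable]: "g \<in> borel_measurable L" using gi by auto
  define S where "S = (\<integral>s. g s \<partial>L)"
  have c1m: "(\<lambda>(t, s). indicator {..<t} s :: real) \<in> borel_measurable (L \<Otimes>\<^sub>M L)"
  proof -
    have e: "(\<lambda>(t, s). indicator {..<t} s :: real) = (\<lambda>z. if snd z < fst z then 1 else 0)"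
      by (auto simp: fun_eq_iff split: split_indicator)
    show ?thesis unfolding e by measurable
  qed
  have c2m: "(\<lambda>(t, s). indicator {t..} s :: real) \<in> borel_measurable (L \<Otimes>\<^sub>M L)"
  proof -
    have e: "(\<lambda>(t, s). indicator {t..} s :: real) = (\<lambda>z. if fst z \<le> snd z then 1 else 0)"
      by (auto simp: fun_eq_iff split: split_indicator)
    show ?thesis unfolding e by measurable
  qed
  have I1: "integrable (L \<Otimes>\<^sub>M L) (\<lambda>(t, s). g t * g s * indicator {..<t} s)"
    by (rule prod_int_LL[OF gi c1m]) (auto split: split_indicator)
  have I2: "integrable (L \<Otimes>\<^sub>M L) (\<lambda>(t, s). g t * g s * indicator {t..} s)"
    by (rule prod_int_LL[OF gi c2m]) (auto split: split_indicator)
  have step1: "S * S = (\<integral>t. (\<integral>s. g t * g s \<partial>L) \<partial>L)"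
    by (simp add: S_def)
  have step2: "(\<integral>s. g t * g s \<partial>L) = (\<integral>s. g t * g s * indicator {..<t} s \<partial>L) + (\<integral>s. g t * g s * indicator {t..} s \<partial>L)" for t
  proof -
    have "(\<integral>s. g t * g s * indicator {..<t} s \<partial>L) + (\<integral>s. g t * g s * indicator {t..} s \<partial>L)
        = g t * ((\<integral>s. indicator {..<t} s * g s \<partial>L) + (\<integral>s. indicator {t..} s * g s \<partial>L))"
    proof -
      have e1: "(\<lambda>s. g t * g s * indicator {..<t} s) = (\<lambda>s. g t * (indicator {..<t} s * g s))"
        by (simp add: fun_eq_iff mult_ac)
      have e2: "(\<lambda>s. g t * g s * indicator {t..} s) = (\<lambda>s. g t * (indicator {t..} s * g s))"
        by (simp add: fun_eq_iff mult_ac)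
      show ?thesis unfolding e1 e2 integral_mult_right_zero by (simp add: distrib_left)
    qed
    also have "(\<integral>s. indicator {..<t} s * g s \<partial>L) + (\<integral>s. indicator {t..} s * g s \<partial>L)
        = (\<integral>s. indicator {..<t} s * g s + indicator {t..} s * g s \<partial>L)"
      by (rule Bochner_Integration.integral_add[symmetric]) (auto intro!: ind_int gi)
    also have "\<dots> = (\<integral>s. g s \<partial>L)"
      by (intro Bochner_Integration.integral_cong) (auto split: split_indicator)
    finally show ?thesis by simp
  qed
  have int1: "integrable L (\<lambda>t. \<integral>s. g t * g s * indicator {..<t} s \<partial>L)"
    using LL.integrable_fst[OF I1] .
  have int2: "integrable L (\<lambda>t. \<integral>s. g t * g s * indicator {t..} s \<partial>L)"
    using LL.integrable_fst[OF I2] .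
  have step3: "(\<integral>t. \<integral>s. g t * g s * indicator {t..} s \<partial>L \<partial>L) = (\<integral>s. \<integral>t. g t * g s * indicator {t..} s \<partial>L \<partial>L)"
    using LL.Fubini_integral[OF I2] by simp
  have step4: "(\<integral>s. \<integral>t. g t * g s * indicator {t..} s \<partial>L \<partial>L) = (\<integral>t. \<integral>s. g t * g s * indicator {..<t} s \<partial>L \<partial>L)"
  proof (rule Bochner_Integration.integral_cong[OF refl])
    fix a
    have "(\<integral>b. g b * g a * indicator {b..} a \<partial>L) = (\<integral>b. g a * g b * indicator {..<a} b \<partial>L)"
    proof (rule integral_cong_AE)
      have [measurable]: "(\<lambda>b. indicator {b..} a :: real) \<in> borel_measurable L"
      proof -
        have e: "(\<lambda>b. indicator {b..} a :: real) = (\<lambda>b. if b \<le> a then 1 else 0)"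
          by (auto simp: fun_eq_iff split: split_indicator)
        show ?thesis unfolding e by measurable
      qed
      have [measurable]: "(\<lambda>b. indicator {..<a} b :: real) \<in> borel_measurable L"
      proof -
        have e: "(\<lambda>b. indicator {..<a} b :: real) = (\<lambda>b. if b < a then 1 else 0)"
          by (auto simp: fun_eq_iff split: split_indicator)
        show ?thesis unfolding e by measurable
      qed
      show "(\<lambda>b. g b * g a * indicator {b..} a) \<in> borel_measurable L" by measurable
      show "(\<lambda>b. g a * g b * indicator {..<a} b) \<in> borel_measurable L" by measurable
      show "AE b in L. g b * g a * indicator {b..} a = g a * g b * indicator {..<a} b"
        using AE_L_neq[of a] by eventually_elim (auto split: split_indicator)
    qed
    then show "(\<integral>t. g t * g a * indicator {t..} a \<partial>L) = (\<integral>s. g a * g s * indicator {..<a} s \<partial>L)" by simp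
  qed
  have step5: "(\<integral>s. g t * g s * indicator {..<t} s \<partial>L) = indicator {..r} t * f t * Yf f t" for t
  proof (cases "t \<le> r")
    case True
    have "(\<integral>s. g t * g s * indicator {..<t} s \<partial>L) = (\<integral>s. g t * (indicator {..<t} s * f s) \<partial>L)"
      using True by (intro Bochner_Integration.integral_cong) (auto simp: g_def split: split_indicator)
    then show ?thesis by (simp add: Yf_def g_def)
  next
    case False
    then show ?thesis by (simp add: g_def)
  qed
  have "S * S = (\<integral>t. (\<integral>s. g t * g s * indicator {..<t} s \<partial>L) + (\<integral>s. g t * g s * indicator {t..} s \<partial>L) \<partial>L)"
    unfolding step1 using step2 by simp
  also have "\<dots> = (\<integral>t. \<integral>s. g t * g s * indicator {..<t} s \<partial>L \<partial>L) + (\<integral>t. \<integral>s. g t * g s * indicator {t..} s \<partial>L \<partial>L)"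
    by (rule Bochner_Integration.integral_add[OF int1 int2])
  also have "\<dots> = 2 * (\<integral>t. \<integral>s. g t * g s * indicator {..<t} s \<partial>L \<partial>L)"
    unfolding step3 step4 by simp
  also have "\<dots> = 2 * (\<integral>t. indicator {..r} t * f t * Yf f t \<partial>L)"
    by (simp only: step5)
  finally have "S * S = 2 * (\<integral>t. indicator {..r} t * f t * Yf f t \<partial>L)" .
  then show ?thesis by (simp add: S_def g_def power2_eq_square)
qed


lemma int_fst_LL:
  fixes h :: "real \<Rightarrow> real"
  assumes "integrable L h"
  shows "integrable (L \<Otimes>\<^sub>M L) (\<lambda>(t, r). h t)"
  unfolding integrable_iff_bounded
proof
  have [measurable]: "h \<in> borel_measurable L" using assms by auto
  show "(\<lambda>(t, r). h t) \<in> borel_measurable (L \<Otimes>\<^sub>M L)" by measurable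
  have "(\<integral>\<^sup>+ z. ennreal (norm ((\<lambda>(t, r). h t) z)) \<partial>(L \<Otimes>\<^sub>M L)) = (\<integral>\<^sup>+ t. \<integral>\<^sup>+ r. ennreal (norm (h t)) \<partial>L \<partial>L)"
    by (subst PS.M1.nn_integral_fst[symmetric]) (auto simp: case_prod_beta)
  also have "\<dots> = (\<integral>\<^sup>+ t. ennreal (norm (h t)) * ennreal T \<partial>L)"
    using emL by (intro nn_integral_cong) simp
  also have "\<dots> = (\<integral>\<^sup>+ t. ennreal (norm (h t)) \<partial>L) * ennreal T"
    by (rule nn_integral_multc) auto
  also have "\<dots> < \<infinity>" using assms unfolding integrable_iff_bounded by (simp add: ennreal_mult_less_top)
  finally show "(\<integral>\<^sup>+ z. ennreal (norm ((\<lambda>(t, r). h t) z)) \<partial>(L \<Otimes>\<^sub>M L)) < \<infinity>" .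
qed

lemma meas_L_Ici: "t \<in> {0..T} \<Longrightarrow> (\<integral>r. indicator {t..} r \<partial>L) = T - t"
proof -
  assume t: "t \<in> {0..T}"
  have "(\<integral>r. indicator {t..} r \<partial>L) = measure L ({t..} \<inter> space L)"
    by (rule Bochner_Integration.integral_indicator)
  also have "{t..} \<inter> space L = {t..T}" using t by auto
  also have "measure L {t..T} = measure lborel {t..T}"
    using t by (intro measure_restrict_space) auto
  also have "\<dots> = T - t" using t by simp
  finally show ?thesis .
qed

lemma path_nonneg:
  fixes f :: "real \<Rightarrow> real"
  assumes f: "integrable L f" and phi: "phi \<ge> 0" and rho: "rho \<ge> 0"
  shows "0 \<le> (\<integral>t. f t * ((phi * (T - t) + rho) * Yf f t) \<partial>L)"
proof -
  have fm[measurable]: "f \<in> borel_measurable L" using f by auto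
  have Ym[measurable]: "Yf f \<in> borel_measurable L" by (rule Yf_meas[OF fm])
  define B where "B = (\<integral>s. \<bar>f s\<bar> \<partial>L)"
  have YB: "\<bar>Yf f t\<bar> \<le> B" for t unfolding B_def by (rule Yf_bound[OF f])
  have B0: "0 \<le> B" unfolding B_def by simp
  have i1: "integrable L (\<lambda>t. f t * Yf f t)"
  proof (rule Bochner_Integration.integrable_bound)
    show "integrable L (\<lambda>t. B * \<bar>f t\<bar>)" using f by auto
    show "AE t in L. norm (f t * Yf f t) \<le> norm (B * \<bar>f t\<bar>)"
    proof (rule AE_I2)
      fix t
      have "\<bar>f t\<bar> * \<bar>Yf f t\<bar> \<le> \<bar>f t\<bar> * B" by (rule mult_left_mono[OF YB]) simp
      then show "norm (f t * Yf f t) \<le> norm (B * \<bar>f t\<bar>)" using B0 by (simp add: abs_mult mult.commute)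
    qed
  qed simp
  have i2: "integrable L (\<lambda>t. (T - t) * (f t * Yf f t))"
  proof (rule Bochner_Integration.integrable_bound)
    show "integrable L (\<lambda>t. T * (f t * Yf f t))" using i1 by auto
    show "AE t in L. norm ((T - t) * (f t * Yf f t)) \<le> norm (T * (f t * Yf f t))"
    proof (rule AE_I2)
      fix t assume "t \<in> space L"
      then have "\<bar>T - t\<bar> \<le> \<bar>T\<bar>" using T_pos by auto
      then show "norm ((T - t) * (f t * Yf f t)) \<le> norm (T * (f t * Yf f t))"
        by (simp add: abs_mult mult_right_mono)
    qed
  qed simp
  have e: "(\<integral>t. f t * ((phi * (T - t) + rho) * Yf f t) \<partial>L)
      = rho * (\<integral>t. f t * Yf f t \<partial>L) + phi * (\<integral>t. (T - t) * (f t * Yf f t) \<partial>L)"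
  proof -
    have "(\<integral>t. f t * ((phi * (T - t) + rho) * Yf f t) \<partial>L)
        = (\<integral>t. rho * (f t * Yf f t) + phi * ((T - t) * (f t * Yf f t)) \<partial>L)"
      by (intro Bochner_Integration.integral_cong) (auto simp: algebra_simps)
    also have "\<dots> = rho * (\<integral>t. f t * Yf f t \<partial>L) + phi * (\<integral>t. (T - t) * (f t * Yf f t) \<partial>L)"
      using i1 i2 by simp
    finally show ?thesis .
  qed
  have A: "0 \<le> (\<integral>t. f t * Yf f t \<partial>L)"
  proof -
    have "(\<integral>t. f t * Yf f t \<partial>L) = (\<integral>t. indicator {..T} t * f t * Yf f t \<partial>L)"
      by (intro Bochner_Integration.integral_cong) (auto split: split_indicator)
    also have "\<dots> = (\<integral>s. indicator {..T} s * f s \<partial>L)\<^sup>2 / 2" by (rule tri[OF f])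
    finally show ?thesis using zero_le_power2[of "\<integral>s. indicator {..T} s * f s \<partial>L"] by linarith
  qed
  have Bn: "0 \<le> (\<integral>t. (T - t) * (f t * Yf f t) \<partial>L)"
  proof -
    have IF: "integrable (L \<Otimes>\<^sub>M L) (\<lambda>(t, r). indicator {t..} r * (f t * Yf f t))"
    proof (rule Bochner_Integration.integrable_bound[OF int_fst_LL[OF integrable_abs[OF i1]]])
      have e: "(\<lambda>(t, r). indicator {t..} r * (f t * Yf f t)) = (\<lambda>z. (if fst z \<le> snd z then 1 else 0) * (f (fst z) * Yf f (fst z)))"
        by (auto simp: fun_eq_iff split: split_indicator)
      show "(\<lambda>(t, r). indicator {t..} r * (f t * Yf f t)) \<in> borel_measurable (L \<Otimes>\<^sub>M L)"
        unfolding e by measurable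
    qed (auto split: split_indicator)
    have "(\<integral>t. (T - t) * (f t * Yf f t) \<partial>L) = (\<integral>t. (\<integral>r. indicator {t..} r \<partial>L) * (f t * Yf f t) \<partial>L)"
      using meas_L_Ici by (intro Bochner_Integration.integral_cong) auto
    also have "\<dots> = (\<integral>t. \<integral>r. indicator {t..} r * (f t * Yf f t) \<partial>L \<partial>L)"
      by simp
    also have "\<dots> = (\<integral>r. \<integral>t. indicator {t..} r * (f t * Yf f t) \<partial>L \<partial>L)"
      using LL.Fubini_integral[OF IF] by simp
    also have "\<dots> = (\<integral>r. (\<integral>s. indicator {..r} s * f s \<partial>L)\<^sup>2 / 2 \<partial>L)"
    proof (rule Bochner_Integration.integral_cong[OF refl])
      fix r
      have "(\<integral>t. indicator {t..} r * (f t * Yf f t) \<partial>L) = (\<integral>t. indicator {..r} t * f t * Yf f t \<partial>L)"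
        by (intro Bochner_Integration.integral_cong) (auto split: split_indicator)
      also have "\<dots> = (\<integral>s. indicator {..r} s * f s \<partial>L)\<^sup>2 / 2" by (rule tri[OF f])
      finally show "(\<integral>t. indicator {t..} r * (f t * Yf f t) \<partial>L) = (\<integral>s. indicator {..r} s * f s \<partial>L)\<^sup>2 / 2" .
    qed
    finally have eq: "(\<integral>t. (T - t) * (f t * Yf f t) \<partial>L) = (\<integral>r. (\<integral>s. indicator {..r} s * f s \<partial>L)\<^sup>2 / 2 \<partial>L)" .
    have nn: "0 \<le> (\<integral>r. (\<integral>s. indicator {..r} s * f s \<partial>L)\<^sup>2 / 2 \<partial>L)"
      by (rule integral_nonneg_AE) simp
    show ?thesis unfolding eq by (rule nn)
  qed
  show ?thesis unfolding e using A Bn phi rho by simp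
qed

lemma part1:
  assumes u: "u \<in> L2 M F T" and phi: "phi \<ge> 0" and rho: "rho \<ge> 0"
  shows "0 \<le> ip M T u (volt (Hker T phi rho) u)"
proof (cases "integrable (L \<Otimes>\<^sub>M M) (\<lambda>(s, \<omega>). u s \<omega> * volt (Hker T phi rho) u s \<omega>)")
  case False
  then show ?thesis by (simp add: ip_def PM_def not_integrable_integral_eq)
next
  case True
  have "ip M T u (volt (Hker T phi rho) u) = (\<integral>\<omega>. \<integral>s. u s \<omega> * volt (Hker T phi rho) u s \<omega> \<partial>L \<partial>M)"
    unfolding ip_def PM_def using PS.integral_snd[OF True] by simp
  also have "0 \<le> \<dots>"
  proof (rule integral_nonneg_AE)
    show "AE \<omega> in M. 0 \<le> (\<integral>s. u s \<omega> * volt (Hker T phi rho) u s \<omega> \<partial>L)"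
      using L2_AE[OF u]
    proof eventually_elim
      case (elim \<omega>)
      then have fi: "integrable L (\<lambda>s. u s \<omega>)" by simp
      have "(\<integral>s. u s \<omega> * volt (Hker T phi rho) u s \<omega> \<partial>L)
          = (\<integral>t. u t \<omega> * ((phi * (T - t) + rho) * Yf (\<lambda>s. u s \<omega>) t) \<partial>L)"
      proof (rule Bochner_Integration.integral_cong[OF refl])
        fix t assume t: "t \<in> space L"
        have "volt (Hker T phi rho) u t \<omega> = (\<integral>s. indicator {0..t} s * Hker T phi rho t s * u s \<omega> \<partial>L)"
          using t by (intro volt_L) auto
        also have "\<dots> = (\<integral>s. (phi * (T - t) + rho) * (indicator {..<t} s * u s \<omega>) \<partial>L)"
          by (intro Bochner_Integration.integral_cong) (auto simp: Hker_def split: split_indicator)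
        also have "\<dots> = (phi * (T - t) + rho) * Yf (\<lambda>s. u s \<omega>) t"
          by (simp add: Yf_def)
        finally show "u t \<omega> * volt (Hker T phi rho) u t \<omega> = u t \<omega> * ((phi * (T - t) + rho) * Yf (\<lambda>s. u s \<omega>) t)"
          by simp
      qed
      also have "0 \<le> \<dots>" by (rule path_nonneg[OF fi phi rho])
      finally show ?case .
    qed
  qed
  finally show ?thesis .
qed

end

locale hsetting =
  fixes h h' :: "real \<Rightarrow> real" and Bh :: real
  assumes hd: "\<And>x. (h has_real_derivative h' x) (at x)"
    and hb: "\<And>x. \<bar>h' x\<bar> \<le> Bh"
begin

lemma Bh_nn: "0 \<le> Bh" using hb[of 0] by linarith

lemma h_cont: "continuous_on UNIV h"
  using hd by (intro DERIV_continuous_on) (auto intro: has_field_derivative_at_within)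

lemma h_meas[measurable]: "h \<in> borel_measurable borel"
  by (rule borel_measurable_continuous_onI[OF h_cont])

lemma h'_meas[measurable]: "h' \<in> borel_measurable borel"
proof (rule borel_measurable_LIMSEQ_real)
  fix x :: real
  have "((\<lambda>y. (h y - h x) / (y - x)) \<longlongrightarrow> h' x) (at x)"
    using hd[of x] by (simp add: has_field_derivative_iff)
  then have H: "\<forall>X. (\<forall>i. X i \<in> UNIV - {x}) \<longrightarrow> X \<longlonglongrightarrow> x \<longrightarrow> (((\<lambda>y. (h y - h x) / (y - x)) \<circ> X) \<longlonglongrightarrow> h' x)"
    unfolding tendsto_at_iff_sequentially .
  have A: "(\<lambda>i. x + inverse (real (Suc i))) \<longlonglongrightarrow> x"
    using tendsto_add[OF tendsto_const LIMSEQ_inverse_real_of_nat, of x] by simp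
  have B: "x + inverse (real (Suc i)) \<in> UNIV - {x}" for i
    by auto
  have "((\<lambda>y. (h y - h x) / (y - x)) \<circ> (\<lambda>i. x + inverse (real (Suc i)))) \<longlonglongrightarrow> h' x"
    using H[rule_format, OF B A] .
  then show "(\<lambda>i. (h (x + inverse (real (Suc i))) - h x) / (x + inverse (real (Suc i)) - x)) \<longlonglongrightarrow> h' x"
    by (simp add: comp_def)
next
  fix i :: nat
  show "(\<lambda>x. (h (x + inverse (real (Suc i))) - h x) / (x + inverse (real (Suc i)) - x)) \<in> borel_measurable borel"
    by measurable
qed

lemma h_lip: "\<bar>h x - h y\<bar> \<le> Bh * \<bar>x - y\<bar>"
proof -
  have *: "\<bar>h b - h a\<bar> \<le> Bh * \<bar>b - a\<bar>" if ab: "a < b" for a b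
  proof -
    obtain z where z: "h b - h a = (b - a) * h' z"
      using MVT2[OF ab, of h h'] hd by blast
    have "\<bar>h b - h a\<bar> = \<bar>b - a\<bar> * \<bar>h' z\<bar>" by (simp add: z abs_mult)
    also have "\<dots> \<le> \<bar>b - a\<bar> * Bh" by (intro mult_left_mono hb) simp
    finally show ?thesis by (simp add: mult.commute)
  qed
  show ?thesis
  proof (cases x y rule: linorder_cases)
    case less
    then show ?thesis using *[OF less] by (simp add: abs_minus_commute)
  next
    case equal then show ?thesis by simp
  next
    case greater then show ?thesis using *[OF greater] by simp
  qed
qed

lemma h_lin_bound: "\<bar>h x\<bar> \<le> \<bar>h 0\<bar> + Bh * \<bar>x\<bar>"
proof -
  have "\<bar>h x\<bar> \<le> \<bar>h x - h 0\<bar> + \<bar>h 0\<bar>" using abs_triangle_ineq[of "h x - h 0" "h 0"] by simp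
  then show ?thesis using h_lip[of x 0] by simp
qed


lemma quot_bound:
  assumes yx: "y \<noteq> x" and R: "\<bar>y\<bar> \<le> R"
  shows "\<bar>(h (a + y * b) * (c + y * d) - h (a + x * b) * (c + x * d)) / (y - x)\<bar>
     \<le> Bh * (\<bar>b\<bar> * \<bar>c\<bar>) + Bh * R * (\<bar>b\<bar> * \<bar>d\<bar>) + \<bar>h (a + x * b) * d\<bar>"
proof -
  define A1 where "A1 = h (a + y * b)"
  define A0 where "A0 = h (a + x * b)"
  have yx': "y - x \<noteq> 0" using yx by simp
  have e: "(A1 * (c + y * d) - A0 * (c + x * d)) / (y - x) = (A1 - A0) / (y - x) * (c + y * d) + A0 * d"
  proof -
    have "A1 * (c + y * d) - A0 * (c + x * d) = (A1 - A0) * (c + y * d) + A0 * d * (y - x)"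
      by (simp add: algebra_simps)
    then show ?thesis using yx' by (simp add: add_divide_distrib)
  qed
  have q1: "\<bar>(A1 - A0) / (y - x)\<bar> \<le> Bh * \<bar>b\<bar>"
  proof -
    have "\<bar>A1 - A0\<bar> \<le> Bh * \<bar>(a + y * b) - (a + x * b)\<bar>" unfolding A1_def A0_def by (rule h_lip)
    also have "\<dots> = (Bh * \<bar>b\<bar>) * \<bar>y - x\<bar>"
    proof -
      have "(a + y * b) - (a + x * b) = b * (y - x)" by (simp add: algebra_simps)
      then show ?thesis by (simp add: abs_mult)
    qed
    finally have "\<bar>A1 - A0\<bar> \<le> (Bh * \<bar>b\<bar>) * \<bar>y - x\<bar>" .
    then show ?thesis using yx' by (simp add: abs_divide divide_le_eq)
  qed
  have q2: "\<bar>c + y * d\<bar> \<le> \<bar>c\<bar> + R * \<bar>d\<bar>"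
  proof -
    have "\<bar>c + y * d\<bar> \<le> \<bar>c\<bar> + \<bar>y\<bar> * \<bar>d\<bar>" using abs_triangle_ineq[of c "y * d"] by (simp add: abs_mult)
    also have "\<bar>y\<bar> * \<bar>d\<bar> \<le> R * \<bar>d\<bar>" using R by (intro mult_right_mono) auto
    finally show ?thesis by simp
  qed
  have "\<bar>(A1 - A0) / (y - x) * (c + y * d)\<bar> \<le> (Bh * \<bar>b\<bar>) * (\<bar>c\<bar> + R * \<bar>d\<bar>)"
    unfolding abs_mult by (rule mult_mono[OF q1 q2]) (use Bh_nn in auto)
  also have "\<dots> = Bh * (\<bar>b\<bar> * \<bar>c\<bar>) + Bh * R * (\<bar>b\<bar> * \<bar>d\<bar>)" by (simp add: algebra_simps)
  finally have "\<bar>(A1 - A0) / (y - x) * (c + y * d)\<bar> \<le> Bh * (\<bar>b\<bar> * \<bar>c\<bar>) + Bh * R * (\<bar>b\<bar> * \<bar>d\<bar>)" .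
  then show ?thesis
    unfolding A1_def[symmetric] A0_def[symmetric] e
    using abs_triangle_ineq[of "(A1 - A0) / (y - x) * (c + y * d)" "A0 * d"] by simp
qed

lemma pt_deriv:
  "((\<lambda>y. h (a + y * b) * (c + y * d)) has_real_derivative
      h' (a + x * b) * b * (c + x * d) + h (a + x * b) * d) (at x)"
proof -
  have d1: "((\<lambda>y. a + y * b) has_real_derivative b) (at x)"
    by (auto intro!: derivative_eq_intros)
  have d2: "((\<lambda>y. h (a + y * b)) has_real_derivative h' (a + x * b) * b) (at x)"
    using DERIV_chain2[OF hd d1] .
  have d3: "((\<lambda>y. c + y * d) has_real_derivative d) (at x)"
    by (auto intro!: derivative_eq_intros)
  show ?thesis using DERIV_mult[OF d2 d3] by (simp add: mult.commute)
qed

lemma deriv_under: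
  fixes a b c d :: "'b \<Rightarrow> real"
  assumes [measurable]: "a \<in> borel_measurable Q" "b \<in> borel_measurable Q" "c \<in> borel_measurable Q" "d \<in> borel_measurable Q"
    and i1: "integrable Q (\<lambda>z. \<bar>b z\<bar> * \<bar>c z\<bar>)" and i2: "integrable Q (\<lambda>z. \<bar>b z\<bar> * \<bar>d z\<bar>)"
    and i3: "\<And>y. integrable Q (\<lambda>z. h (a z + y * b z) * (c z + y * d z))"
    and i4: "integrable Q (\<lambda>z. h (a z + x * b z) * d z)"
  shows "((\<lambda>y. \<integral>z. h (a z + y * b z) * (c z + y * d z) \<partial>Q) has_real_derivative
          (\<integral>z. h' (a z + x * b z) * b z * (c z + x * d z) + h (a z + x * b z) * d z \<partial>Q)) (at x)"
proof -
  define q where "q y z = (h (a z + y * b z) * (c z + y * d z) - h (a z + x * b z) * (c z + x * d z)) / (y - x)" for y z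
  define \<psi> where "\<psi> z = h' (a z + x * b z) * b z * (c z + x * d z) + h (a z + x * b z) * d z" for z
  have pt: "((\<lambda>y. q y z) \<longlongrightarrow> \<psi> z) (at x)" for z
    using pt_deriv[of "a z" "b z" "c z" "d z" x] unfolding has_field_derivative_iff q_def \<psi>_def .
  show ?thesis
    unfolding has_field_derivative_iff tendsto_at_iff_sequentially
  proof (intro allI impI)
    fix X :: "nat \<Rightarrow> real" assume X: "\<forall>i. X i \<in> UNIV - {x}" "X \<longlonglongrightarrow> x"
    obtain R where R: "0 < R" "\<forall>n. norm (X n) \<le> R"
      using BseqE[OF convergent_imp_Bseq[OF convergentI[OF X(2)]]] by blast
    have eq: "((\<integral>z. h (a z + X i * b z) * (c z + X i * d z) \<partial>Q) - (\<integral>z. h (a z + x * b z) * (c z + x * d z) \<partial>Q)) / (X i - x)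
        = (\<integral>z. q (X i) z \<partial>Q)" for i
      unfolding q_def by (simp add: Bochner_Integration.integral_diff[OF i3 i3])
    have "(\<lambda>i. \<integral>z. q (X i) z \<partial>Q) \<longlonglongrightarrow> (\<integral>z. \<psi> z \<partial>Q)"
    proof (rule integral_dominated_convergence[where w = "\<lambda>z. Bh * (\<bar>b z\<bar> * \<bar>c z\<bar>) + Bh * R * (\<bar>b z\<bar> * \<bar>d z\<bar>) + \<bar>h (a z + x * b z) * d z\<bar>"])
      show "\<psi> \<in> borel_measurable Q" unfolding \<psi>_def by measurable
      show "\<And>i. q (X i) \<in> borel_measurable Q" unfolding q_def by measurable
      show "integrable Q (\<lambda>z. Bh * (\<bar>b z\<bar> * \<bar>c z\<bar>) + Bh * R * (\<bar>b z\<bar> * \<bar>d z\<bar>) + \<bar>h (a z + x * b z) * d z\<bar>)"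
        using i1 i2 i4 by auto
      show "AE z in Q. (\<lambda>i. q (X i) z) \<longlonglongrightarrow> \<psi> z"
      proof (rule AE_I2)
        fix z
        have "\<forall>X. (\<forall>i. X i \<in> UNIV - {x}) \<longrightarrow> X \<longlonglongrightarrow> x \<longrightarrow> (((\<lambda>y. q y z) \<circ> X) \<longlonglongrightarrow> \<psi> z)"
          using pt[of z] unfolding tendsto_at_iff_sequentially .
        then show "(\<lambda>i. q (X i) z) \<longlonglongrightarrow> \<psi> z" using X by (simp add: comp_def)
      qed
      show "AE z in Q. norm (q (X i) z) \<le> Bh * (\<bar>b z\<bar> * \<bar>c z\<bar>) + Bh * R * (\<bar>b z\<bar> * \<bar>d z\<bar>) + \<bar>h (a z + x * b z) * d z\<bar>" for i
      proof (rule AE_I2)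
        fix z
        have "X i \<noteq> x" using X(1) by auto
        moreover have "\<bar>X i\<bar> \<le> R" using R(2) by auto
        ultimately show "norm (q (X i) z) \<le> Bh * (\<bar>b z\<bar> * \<bar>c z\<bar>) + Bh * R * (\<bar>b z\<bar> * \<bar>d z\<bar>) + \<bar>h (a z + x * b z) * d z\<bar>"
          unfolding q_def real_norm_def by (rule quot_bound)
      qed
    qed
    then show "((\<lambda>y. ((\<integral>z. h (a z + y * b z) * (c z + y * d z) \<partial>Q) - (\<integral>z. h (a z + x * b z) * (c z + x * d z) \<partial>Q)) / (y - x)) \<circ> X)
        \<longlonglongrightarrow> (\<integral>z. h' (a z + x * b z) * b z * (c z + x * d z) + h (a z + x * b z) * d z \<partial>Q)"
      by (simp add: comp_def eq \<psi>_def)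
  qed
qed

end

lemma cs_int:
  fixes f g :: "'b \<Rightarrow> real"
  assumes [measurable]: "f \<in> borel_measurable Q" "g \<in> borel_measurable Q"
  shows "ennreal ((\<integral>x. f x * g x \<partial>Q)\<^sup>2) \<le> (\<integral>\<^sup>+ x. ennreal ((f x)\<^sup>2) \<partial>Q) * (\<integral>\<^sup>+ x. ennreal ((g x)\<^sup>2) \<partial>Q)"
proof -
  have 1: "ennreal \<bar>\<integral>x. f x * g x \<partial>Q\<bar> \<le> (\<integral>\<^sup>+ x. ennreal \<bar>f x\<bar> * ennreal \<bar>g x\<bar> \<partial>Q)"
  proof -
    have "ennreal \<bar>\<integral>x. f x * g x \<partial>Q\<bar> \<le> (\<integral>\<^sup>+ x. norm (f x * g x) \<partial>Q)"
      using norm_integral_le_nn[of Q "\<lambda>x. f x * g x"] by simp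
    also have "\<dots> = (\<integral>\<^sup>+ x. ennreal \<bar>f x\<bar> * ennreal \<bar>g x\<bar> \<partial>Q)"
      by (intro nn_integral_cong) (simp add: abs_mult ennreal_mult)
    finally show ?thesis .
  qed
  have 2: "(\<integral>\<^sup>+ x. ennreal \<bar>f x\<bar> * ennreal \<bar>g x\<bar> \<partial>Q)\<^sup>2 \<le> (\<integral>\<^sup>+ x. ennreal \<bar>f x\<bar> ^ 2 \<partial>Q) * (\<integral>\<^sup>+ x. ennreal \<bar>g x\<bar> ^ 2 \<partial>Q)"
    by (rule Cauchy_Schwarz_nn_integral) auto
  have 3: "(\<lambda>x. ennreal \<bar>f x\<bar> ^ 2) = (\<lambda>x. ennreal ((f x)\<^sup>2))" "(\<lambda>x. ennreal \<bar>g x\<bar> ^ 2) = (\<lambda>x. ennreal ((g x)\<^sup>2))"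
    by (auto simp: ennreal_power fun_eq_iff)
  have "ennreal ((\<integral>x. f x * g x \<partial>Q)\<^sup>2) = (ennreal \<bar>\<integral>x. f x * g x \<partial>Q\<bar>)\<^sup>2"
    by (simp add: ennreal_power)
  also have "\<dots> \<le> (\<integral>\<^sup>+ x. ennreal \<bar>f x\<bar> * ennreal \<bar>g x\<bar> \<partial>Q)\<^sup>2"
    using 1 by (intro power_mono) auto
  also have "\<dots> \<le> (\<integral>\<^sup>+ x. ennreal ((f x)\<^sup>2) \<partial>Q) * (\<integral>\<^sup>+ x. ennreal ((g x)\<^sup>2) \<partial>Q)"
    using 2 unfolding 3 .
  finally show ?thesis .
qed

context fsetting begin

definition Yadj :: "(real \<Rightarrow> real \<Rightarrow> real) \<Rightarrow> 'a proc \<Rightarrow> 'a proc" where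
  "Yadj K k t \<omega> = (\<integral>s. indicator {t..T} s * K s t * k s \<omega> \<partial>L)"

lemma Yadj_L:
  assumes "t \<in> {0..T}"
  shows "(LINT s:{t..T}|lborel. K s t * k s \<omega>) = Yadj K k t \<omega>"
proof -
  have "Yadj K k t \<omega> = (\<integral>s. indicator {0..T} s *\<^sub>R (indicator {t..T} s * K s t * k s \<omega>) \<partial>lborel)"
    unfolding Yadj_def by (rule integral_restrict_space) simp
  also have "\<dots> = (\<integral>s. indicator {t..T} s *\<^sub>R (K s t * k s \<omega>) \<partial>lborel)"
    using assms by (intro Bochner_Integration.integral_cong) (auto split: split_indicator)
  finally show ?thesis by (simp add: set_lebesgue_integral_def)
qed

lemma Yadj_meas:
  assumes K: "kern_ok K C" and k: "(\<lambda>(s, \<omega>). k s \<omega>) \<in> borel_measurable (L \<Otimes>\<^sub>M M)"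
  shows "(\<lambda>(t, \<omega>). Yadj K k t \<omega>) \<in> borel_measurable (L \<Otimes>\<^sub>M M)"
proof -
  have [measurable]: "(\<lambda>(t, s). K t s) \<in> borel_measurable (L \<Otimes>\<^sub>M L)"
    using K kern_LL unfolding kern_ok_def by blast
  note k[measurable]
  have "(\<lambda>(z, s). indicator {fst z..T} s * K s (fst z) * k s (snd z)) \<in> borel_measurable ((L \<Otimes>\<^sub>M M) \<Otimes>\<^sub>M L)"
  proof -
    have e: "(\<lambda>(z, s). indicator {fst z..T} s * K s (fst z) * k s (snd z)) =
      (\<lambda>p. (if fst (fst p) \<le> snd p \<and> snd p \<le> T then 1 else 0) * K (snd p) (fst (fst p)) * k (snd p) (snd (fst p)))"
      by (auto simp: fun_eq_iff split: split_indicator)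
    have [measurable]: "(\<lambda>p. fst (fst p)) \<in> borel_measurable ((L \<Otimes>\<^sub>M M) \<Otimes>\<^sub>M L)"
      by (rule measurable_compose[OF measurable_fst fst_borel_LM])
    have [measurable]: "(\<lambda>p. snd p) \<in> borel_measurable ((L \<Otimes>\<^sub>M M) \<Otimes>\<^sub>M L)"
      by (rule measurable_compose[OF measurable_snd id_L_borel])
    show ?thesis unfolding e by measurable
  qed
  then have "(\<lambda>z. \<integral>s. indicator {fst z..T} s * K s (fst z) * k s (snd z) \<partial>L) \<in> borel_measurable (L \<Otimes>\<^sub>M M)"
    by (rule PS.M1.borel_measurable_lebesgue_integral)
  then show ?thesis
    by (simp add: Yadj_def case_prod_beta)
qed


lemma ind_swap: "t \<in> {0..T} \<Longrightarrow> s \<in> {0..T} \<Longrightarrow> (indicator {t..T} s :: real) = indicator {0..s} t"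
  by (auto split: split_indicator)

lemma Gamma_meas:
  assumes K: "kern_ok K C"
  shows "(\<lambda>(t, s). ennreal ((K s t)\<^sup>2) * indicator {t..T} s) \<in> borel_measurable (L \<Otimes>\<^sub>M L)"
proof -
  have [measurable]: "(\<lambda>(t, s). K t s) \<in> borel_measurable (L \<Otimes>\<^sub>M L)"
    using K kern_LL unfolding kern_ok_def by blast
  have e: "(\<lambda>(t, s). ennreal ((K s t)\<^sup>2) * indicator {t..T} s) =
     (\<lambda>p. ennreal ((K (snd p) (fst p))\<^sup>2) * (if fst p \<le> snd p \<and> snd p \<le> T then 1 else 0))"
    by (auto simp: fun_eq_iff split: split_indicator)
  show ?thesis unfolding e by measurable
qed

lemma Gamma_bound:
  assumes K: "kern_ok K C"
  shows "(\<integral>\<^sup>+ t. \<integral>\<^sup>+ s. ennreal ((K s t)\<^sup>2) * indicator {t..T} s \<partial>L \<partial>L) \<le> ennreal T * ennreal C"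
proof -
  have "(\<integral>\<^sup>+ t. \<integral>\<^sup>+ s. ennreal ((K s t)\<^sup>2) * indicator {t..T} s \<partial>L \<partial>L)
      = (\<integral>\<^sup>+ s. \<integral>\<^sup>+ t. ennreal ((K s t)\<^sup>2) * indicator {t..T} s \<partial>L \<partial>L)"
    using LL.Fubini'[OF Gamma_meas[OF K]] by simp
  also have "\<dots> \<le> (\<integral>\<^sup>+ s. ennreal C \<partial>L)"
  proof (intro nn_integral_mono)
    fix s assume s: "s \<in> space L"
    have "(\<integral>\<^sup>+ t. ennreal ((K s t)\<^sup>2) * indicator {t..T} s \<partial>L) = (\<integral>\<^sup>+ t. ennreal ((K s t)\<^sup>2) * indicator {0..s} t \<partial>L)"
      using s by (intro nn_integral_cong) (auto split: split_indicator)
    also have "\<dots> \<le> ennreal C" using s by (intro kern_sq_nn[OF K]) auto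
    finally show "(\<integral>\<^sup>+ t. ennreal ((K s t)\<^sup>2) * indicator {t..T} s \<partial>L) \<le> ennreal C" .
  qed
  also have "\<dots> = ennreal T * ennreal C" using emL by (simp add: mult.commute)
  finally show ?thesis .
qed

lemma kern_sec2:
  assumes "kern_ok K C"
  shows "(\<lambda>s. K s t) \<in> borel_measurable L"
proof -
  have "(\<lambda>(t, s). K t s) \<in> borel_measurable (lborel \<Otimes>\<^sub>M lborel)"
    using assms unfolding kern_ok_def by blast
  then have "(\<lambda>s. K s t) \<in> borel_measurable lborel"
    using measurable_compose[OF measurable_Pair2'[of t lborel lborel]] by (auto simp: case_prod_beta)
  then show ?thesis by (rule measurable_restrict_space1)
qed

lemma Yadj_bound:
  assumes K: "kern_ok K C" and km: "(\<lambda>s. k s \<omega>) \<in> borel_measurable L"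
  shows "ennreal ((Yadj K k t \<omega>)\<^sup>2) \<le> (\<integral>\<^sup>+ s. ennreal ((K s t)\<^sup>2) * indicator {t..T} s \<partial>L) * (\<integral>\<^sup>+ s. ennreal ((k s \<omega>)\<^sup>2) \<partial>L)"
proof -
  have [measurable]: "(\<lambda>s. K s t) \<in> borel_measurable L" by (rule kern_sec2[OF K])
  have fm: "(\<lambda>s. indicator {t..T} s * K s t) \<in> borel_measurable L"
  proof -
    have e: "(\<lambda>s. indicator {t..T} s * K s t) = (\<lambda>s. (if t \<le> s \<and> s \<le> T then 1 else 0) * K s t)"
      by (auto simp: fun_eq_iff split: split_indicator)
    show ?thesis unfolding e by measurable
  qed
  have "ennreal ((Yadj K k t \<omega>)\<^sup>2) \<le> (\<integral>\<^sup>+ s. ennreal ((indicator {t..T} s * K s t)\<^sup>2) \<partial>L) * (\<integral>\<^sup>+ s. ennreal ((k s \<omega>)\<^sup>2) \<partial>L)"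
    unfolding Yadj_def using cs_int[OF fm km] by simp
  also have "(\<integral>\<^sup>+ s. ennreal ((indicator {t..T} s * K s t)\<^sup>2) \<partial>L) = (\<integral>\<^sup>+ s. ennreal ((K s t)\<^sup>2) * indicator {t..T} s \<partial>L)"
    by (intro nn_integral_cong) (auto split: split_indicator)
  finally show ?thesis .
qed

lemma sq_nn_fin:
  assumes km[measurable]: "(\<lambda>(s, \<omega>). k s \<omega>) \<in> borel_measurable (L \<Otimes>\<^sub>M M)"
    and ki: "integrable (L \<Otimes>\<^sub>M M) (\<lambda>(s, \<omega>). (k s \<omega>)\<^sup>2)"
  shows "(\<integral>\<^sup>+ \<omega>. (\<integral>\<^sup>+ s. ennreal ((k s \<omega>)\<^sup>2) \<partial>L) \<partial>M) < \<infinity>"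
proof -
  have "(\<integral>\<^sup>+ \<omega>. (\<integral>\<^sup>+ s. ennreal ((k s \<omega>)\<^sup>2) \<partial>L) \<partial>M) = (\<integral>\<^sup>+ z. ennreal ((\<lambda>(s, \<omega>). (k s \<omega>)\<^sup>2) z) \<partial>(L \<Otimes>\<^sub>M M))"
    by (subst PS.nn_integral_snd[symmetric]) (auto simp: case_prod_beta)
  also have "\<dots> < \<infinity>"
    using ki unfolding integrable_iff_bounded by (simp add: case_prod_beta case_prod_beta')
  finally show ?thesis .
qed

lemma Yadj_sq_int:
  assumes K: "kern_ok K C" and km: "(\<lambda>(s, \<omega>). k s \<omega>) \<in> borel_measurable (L \<Otimes>\<^sub>M M)"
    and ki: "integrable (L \<Otimes>\<^sub>M M) (\<lambda>(s, \<omega>). (k s \<omega>)\<^sup>2)"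
  shows "integrable (L \<Otimes>\<^sub>M M) (\<lambda>(t, \<omega>). (Yadj K k t \<omega>)\<^sup>2)"
  unfolding integrable_iff_bounded
proof
  have Ym: "(\<lambda>(t, \<omega>). Yadj K k t \<omega>) \<in> borel_measurable (L \<Otimes>\<^sub>M M)" by (rule Yadj_meas[OF K km])
  show "(\<lambda>(t, \<omega>). (Yadj K k t \<omega>)\<^sup>2) \<in> borel_measurable (L \<Otimes>\<^sub>M M)"
    using borel_measurable_power[OF Ym, of 2] by (simp add: case_prod_beta case_prod_beta')
  define \<Gamma> where "\<Gamma> t = (\<integral>\<^sup>+ s. ennreal ((K s t)\<^sup>2) * indicator {t..T} s \<partial>L)" for t
  define Kk where "Kk \<omega> = (\<integral>\<^sup>+ s. ennreal ((k s \<omega>)\<^sup>2) \<partial>L)" for \<omega>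
  have \<Gamma>m: "\<Gamma> \<in> borel_measurable L"
    unfolding \<Gamma>_def using Gamma_meas[OF K] by (rule PS.M1.borel_measurable_nn_integral)
  have Kkm: "Kk \<in> borel_measurable M" unfolding Kk_def by (rule H_meas[OF km])
  have "(\<integral>\<^sup>+ z. ennreal (norm ((\<lambda>(t, \<omega>). (Yadj K k t \<omega>)\<^sup>2) z)) \<partial>(L \<Otimes>\<^sub>M M))
      \<le> (\<integral>\<^sup>+ z. \<Gamma> (fst z) * Kk (snd z) \<partial>(L \<Otimes>\<^sub>M M))"
  proof (intro nn_integral_mono)
    fix z assume "z \<in> space (L \<Otimes>\<^sub>M M)"
    then obtain t \<omega> where z: "z = (t, \<omega>)" "\<omega> \<in> space M" by (auto simp: space_pair_measure)
    show "ennreal (norm ((\<lambda>(t, \<omega>). (Yadj K k t \<omega>)\<^sup>2) z)) \<le> \<Gamma> (fst z) * Kk (snd z)"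
      using Yadj_bound[of K C k \<omega> t, OF K sec_meas[OF km z(2)]] z(1) by (simp add: \<Gamma>_def Kk_def)
  qed
  also have "\<dots> = (\<integral>\<^sup>+ t. \<integral>\<^sup>+ \<omega>. \<Gamma> t * Kk \<omega> \<partial>M \<partial>L)"
    using \<Gamma>m Kkm by (subst PS.M2.nn_integral_fst[symmetric]) (auto simp: case_prod_beta)
  also have "\<dots> = (\<integral>\<^sup>+ t. \<Gamma> t * (\<integral>\<^sup>+ \<omega>. Kk \<omega> \<partial>M) \<partial>L)"
    using Kkm by (intro nn_integral_cong nn_integral_cmult) auto
  also have "\<dots> = (\<integral>\<^sup>+ t. \<Gamma> t \<partial>L) * (\<integral>\<^sup>+ \<omega>. Kk \<omega> \<partial>M)"
    using \<Gamma>m by (rule nn_integral_multc)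
  also have "\<dots> < \<infinity>"
  proof -
    have "(\<integral>\<^sup>+ t. \<Gamma> t \<partial>L) \<le> ennreal T * ennreal C" unfolding \<Gamma>_def by (rule Gamma_bound[OF K])
    then have "(\<integral>\<^sup>+ t. \<Gamma> t \<partial>L) < \<infinity>"
      by (metis ennreal_less_top ennreal_mult_less_top infinity_ennreal_def le_less_trans)
    moreover have "(\<integral>\<^sup>+ \<omega>. Kk \<omega> \<partial>M) < \<infinity>" unfolding Kk_def by (rule sq_nn_fin[OF km ki])
    ultimately show ?thesis by (simp add: ennreal_mult_less_top)
  qed
  finally show "(\<integral>\<^sup>+ z. ennreal (norm ((\<lambda>(t, \<omega>). (Yadj K k t \<omega>)\<^sup>2) z)) \<partial>(L \<Otimes>\<^sub>M M)) < \<infinity>" .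
qed


lemma int_prod2:
  fixes f g :: "_ \<Rightarrow> _ \<Rightarrow> real"
  assumes "integrable Q (\<lambda>(s, \<omega>). (f s \<omega>)\<^sup>2)" "integrable Q (\<lambda>(s, \<omega>). (g s \<omega>)\<^sup>2)"
    "(\<lambda>(s, \<omega>). f s \<omega>) \<in> borel_measurable Q" "(\<lambda>(s, \<omega>). g s \<omega>) \<in> borel_measurable Q"
  shows "integrable Q (\<lambda>(s, \<omega>). f s \<omega> * g s \<omega>)"
proof -
  have a: "integrable Q (\<lambda>z. (f (fst z) (snd z))\<^sup>2)" using assms(1) by (simp add: case_prod_beta case_prod_beta')
  have b: "integrable Q (\<lambda>z. (g (fst z) (snd z))\<^sup>2)" using assms(2) by (simp add: case_prod_beta case_prod_beta')
  have c: "(\<lambda>z. f (fst z) (snd z)) \<in> borel_measurable Q" using assms(3) by (simp add: case_prod_beta case_prod_beta')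
  have d: "(\<lambda>z. g (fst z) (snd z)) \<in> borel_measurable Q" using assms(4) by (simp add: case_prod_beta case_prod_beta')
  have "integrable Q (\<lambda>z. f (fst z) (snd z) * g (fst z) (snd z))" by (rule int_prod[OF a b c d])
  then show ?thesis by (simp add: case_prod_beta case_prod_beta')
qed

lemma path_fubini:
  assumes K: "kern_ok K C"
    and wm[measurable]: "(\<lambda>t. w t \<omega>) \<in> borel_measurable L" and wi: "integrable L (\<lambda>t. (w t \<omega>)\<^sup>2)"
    and km[measurable]: "(\<lambda>t. k t \<omega>) \<in> borel_measurable L" and ki: "integrable L (\<lambda>t. (k t \<omega>)\<^sup>2)"
  shows "(\<integral>t. w t \<omega> * Yadj K k t \<omega> \<partial>L) = (\<integral>s. k s \<omega> * volt K w s \<omega> \<partial>L)"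
proof -
  have [measurable]: "(\<lambda>(t, s). K t s) \<in> borel_measurable (L \<Otimes>\<^sub>M L)"
    using K kern_LL unfolding kern_ok_def by blast
  define \<Phi> where "\<Phi> t s = indicator {t..T} s * K s t * w t \<omega> * k s \<omega>" for t s
  have \<Phi>m: "(\<lambda>(t, s). \<Phi> t s) \<in> borel_measurable (L \<Otimes>\<^sub>M L)"
  proof -
    have e: "(\<lambda>(t, s). \<Phi> t s) = (\<lambda>p. (if fst p \<le> snd p \<and> snd p \<le> T then 1 else 0) * K (snd p) (fst p) * w (fst p) \<omega> * k (snd p) \<omega>)"
      by (auto simp: fun_eq_iff \<Phi>_def split: split_indicator)
    show ?thesis unfolding e by measurable
  qed
  define X where "X s = (\<integral>\<^sup>+ t. ennreal \<bar>indicator {0..s} t * K s t\<bar> * ennreal \<bar>w t \<omega>\<bar> \<partial>L)" for s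
  have Xm: "X \<in> borel_measurable L"
  proof -
    have e: "(\<lambda>(s, t). ennreal \<bar>indicator {0..s} t * K s t\<bar> * ennreal \<bar>w t \<omega>\<bar>)
       = (\<lambda>p. ennreal \<bar>(if 0 \<le> snd p \<and> snd p \<le> fst p then 1 else 0) * K (fst p) (snd p)\<bar> * ennreal \<bar>w (snd p) \<omega>\<bar>)"
      by (auto simp: fun_eq_iff split: split_indicator)
    have "(\<lambda>(s, t). ennreal \<bar>indicator {0..s} t * K s t\<bar> * ennreal \<bar>w t \<omega>\<bar>) \<in> borel_measurable (L \<Otimes>\<^sub>M L)"
      unfolding e by measurable
    then show ?thesis unfolding X_def by (rule PS.M1.borel_measurable_nn_integral)
  qed
  define W where "W = (\<integral>\<^sup>+ t. ennreal ((w t \<omega>)\<^sup>2) \<partial>L)"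
  define Kk where "Kk = (\<integral>\<^sup>+ t. ennreal ((k t \<omega>)\<^sup>2) \<partial>L)"
  have Wf: "W < \<infinity>" using wi unfolding W_def integrable_iff_bounded by simp
  have Kkf: "Kk < \<infinity>" using ki unfolding Kk_def integrable_iff_bounded by simp
  have X2: "(X s)\<^sup>2 \<le> ennreal C * W" if s: "s \<in> space L" for s
  proof -
    have [measurable]: "K s \<in> borel_measurable L" using kern_sec[OF K, of s] by simp
    have "(X s)\<^sup>2 \<le> (\<integral>\<^sup>+ t. (ennreal \<bar>indicator {0..s} t * K s t\<bar>)\<^sup>2 \<partial>L) * (\<integral>\<^sup>+ t. (ennreal \<bar>w t \<omega>\<bar>)\<^sup>2 \<partial>L)"
      unfolding X_def by (rule Cauchy_Schwarz_nn_integral) measurable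
    also have "(\<integral>\<^sup>+ t. (ennreal \<bar>indicator {0..s} t * K s t\<bar>)\<^sup>2 \<partial>L) = (\<integral>\<^sup>+ t. ennreal ((K s t)\<^sup>2) * indicator {0..s} t \<partial>L)"
      by (intro nn_integral_cong) (auto simp: ennreal_power split: split_indicator)
    also have "(\<integral>\<^sup>+ t. (ennreal \<bar>w t \<omega>\<bar>)\<^sup>2 \<partial>L) = W"
      unfolding W_def by (intro nn_integral_cong) (auto simp: ennreal_power)
    also have "(\<integral>\<^sup>+ t. ennreal ((K s t)\<^sup>2) * indicator {0..s} t \<partial>L) * W \<le> ennreal C * W"
      using s by (intro mult_right_mono kern_sq_nn[OF K]) auto
    finally show ?thesis .
  qed
  have \<Phi>i: "integrable (L \<Otimes>\<^sub>M L) (\<lambda>(t, s). \<Phi> t s)"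
    unfolding integrable_iff_bounded
  proof
    show "(\<lambda>(t, s). \<Phi> t s) \<in> borel_measurable (L \<Otimes>\<^sub>M L)" by (rule \<Phi>m)
    have "(\<integral>\<^sup>+ z. ennreal (norm ((\<lambda>(t, s). \<Phi> t s) z)) \<partial>(L \<Otimes>\<^sub>M L)) = (\<integral>\<^sup>+ s. \<integral>\<^sup>+ t. ennreal \<bar>\<Phi> t s\<bar> \<partial>L \<partial>L)"
      using \<Phi>m by (subst LL.nn_integral_snd[symmetric]) (auto simp: case_prod_beta)
    also have "\<dots> = (\<integral>\<^sup>+ s. X s * ennreal \<bar>k s \<omega>\<bar> \<partial>L)"
    proof (intro nn_integral_cong)
      fix s assume s: "s \<in> space L"
      have Ks[measurable]: "K s \<in> borel_measurable L" using kern_sec[OF K, of s] by simp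
      have "(\<integral>\<^sup>+ t. ennreal \<bar>\<Phi> t s\<bar> \<partial>L) = (\<integral>\<^sup>+ t. ennreal \<bar>indicator {0..s} t * K s t\<bar> * ennreal \<bar>w t \<omega>\<bar> * ennreal \<bar>k s \<omega>\<bar> \<partial>L)"
        using s by (intro nn_integral_cong) (auto simp: \<Phi>_def abs_mult ennreal_mult split: split_indicator)
      also have "\<dots> = X s * ennreal \<bar>k s \<omega>\<bar>"
        unfolding X_def by (rule nn_integral_multc) measurable
      finally show "(\<integral>\<^sup>+ t. ennreal \<bar>\<Phi> t s\<bar> \<partial>L) = X s * ennreal \<bar>k s \<omega>\<bar>" .
    qed
    also have "\<dots> < \<infinity>"
    proof -
      have "(\<integral>\<^sup>+ s. X s * ennreal \<bar>k s \<omega>\<bar> \<partial>L)\<^sup>2 \<le> (\<integral>\<^sup>+ s. (X s)\<^sup>2 \<partial>L) * (\<integral>\<^sup>+ s. (ennreal \<bar>k s \<omega>\<bar>)\<^sup>2 \<partial>L)"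
        by (rule Cauchy_Schwarz_nn_integral) (use Xm in auto)
      also have "(\<integral>\<^sup>+ s. (ennreal \<bar>k s \<omega>\<bar>)\<^sup>2 \<partial>L) = Kk"
        unfolding Kk_def by (intro nn_integral_cong) (auto simp: ennreal_power)
      also have "(\<integral>\<^sup>+ s. (X s)\<^sup>2 \<partial>L) \<le> (\<integral>\<^sup>+ s. ennreal C * W \<partial>L)"
        by (intro nn_integral_mono X2)
      also have "(\<integral>\<^sup>+ s. ennreal C * W \<partial>L) = ennreal C * W * ennreal T" using emL by simp
      finally have "(\<integral>\<^sup>+ s. X s * ennreal \<bar>k s \<omega>\<bar> \<partial>L)\<^sup>2 \<le> ennreal C * W * ennreal T * Kk"
        by (simp add: mult_right_mono)
      also have "\<dots> < \<infinity>" using Wf Kkf by (simp add: ennreal_mult_less_top)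
      finally show ?thesis by (simp add: power_less_top_ennreal)
    qed
    finally show "(\<integral>\<^sup>+ z. ennreal (norm ((\<lambda>(t, s). \<Phi> t s) z)) \<partial>(L \<Otimes>\<^sub>M L)) < \<infinity>" .
  qed
  have "(\<integral>t. w t \<omega> * Yadj K k t \<omega> \<partial>L) = (\<integral>t. \<integral>s. \<Phi> t s \<partial>L \<partial>L)"
  proof (rule Bochner_Integration.integral_cong[OF refl])
    fix t
    have "(\<lambda>s. \<Phi> t s) = (\<lambda>s. w t \<omega> * (indicator {t..T} s * K s t * k s \<omega>))"
      by (simp add: fun_eq_iff \<Phi>_def mult_ac)
    then show "w t \<omega> * Yadj K k t \<omega> = (\<integral>s. \<Phi> t s \<partial>L)" by (simp add: Yadj_def)
  qed
  also have "\<dots> = (\<integral>s. \<integral>t. \<Phi> t s \<partial>L \<partial>L)"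
    using LL.Fubini_integral[OF \<Phi>i] by simp
  also have "\<dots> = (\<integral>s. k s \<omega> * volt K w s \<omega> \<partial>L)"
  proof (rule Bochner_Integration.integral_cong[OF refl])
    fix s assume s: "s \<in> space L"
    have "k s \<omega> * volt K w s \<omega> = (\<integral>t. k s \<omega> * (indicator {0..s} t * K s t * w t \<omega>) \<partial>L)"
      using s by (simp add: volt_L)
    also have "\<dots> = (\<integral>t. \<Phi> t s \<partial>L)"
      using s by (intro Bochner_Integration.integral_cong) (auto simp: \<Phi>_def split: split_indicator)
    finally show "(\<integral>t. \<Phi> t s \<partial>L) = k s \<omega> * volt K w s \<omega>" by simp
  qed
  finally show ?thesis .
qed


lemma adj_identity:
  assumes K: "kern_ok K C" and w: "w \<in> L2 M F T"
    and km: "(\<lambda>(s, \<omega>). k s \<omega>) \<in> borel_measurable (L \<Otimes>\<^sub>M M)"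
    and ki: "integrable (L \<Otimes>\<^sub>M M) (\<lambda>(s, \<omega>). (k s \<omega>)\<^sup>2)"
  shows "integrable (L \<Otimes>\<^sub>M M) (\<lambda>(t, \<omega>). w t \<omega> * Yadj K k t \<omega>)"
    and "integrable (L \<Otimes>\<^sub>M M) (\<lambda>(s, \<omega>). k s \<omega> * volt K w s \<omega>)"
    and "integral\<^sup>L (L \<Otimes>\<^sub>M M) (\<lambda>(t, \<omega>). w t \<omega> * Yadj K k t \<omega>) = integral\<^sup>L (L \<Otimes>\<^sub>M M) (\<lambda>(s, \<omega>). k s \<omega> * volt K w s \<omega>)"
proof -
  note wm = L2D(2)[OF w] and wi = L2D(3)[OF w]
  have Ym: "(\<lambda>(t, \<omega>). Yadj K k t \<omega>) \<in> borel_measurable (L \<Otimes>\<^sub>M M)" by (rule Yadj_meas[OF K km])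
  have Yi: "integrable (L \<Otimes>\<^sub>M M) (\<lambda>(t, \<omega>). (Yadj K k t \<omega>)\<^sup>2)" by (rule Yadj_sq_int[OF K km ki])
  have Vm: "(\<lambda>(t, \<omega>). volt K w t \<omega>) \<in> borel_measurable (L \<Otimes>\<^sub>M M)" by (rule volt_meas[OF K wm])
  have Vi: "integrable (L \<Otimes>\<^sub>M M) (\<lambda>(t, \<omega>). (volt K w t \<omega>)\<^sup>2)" by (rule volt_sq_int[OF K w])
  show I1: "integrable (L \<Otimes>\<^sub>M M) (\<lambda>(t, \<omega>). w t \<omega> * Yadj K k t \<omega>)" by (rule int_prod2[OF wi Yi wm Ym])
  show I2: "integrable (L \<Otimes>\<^sub>M M) (\<lambda>(s, \<omega>). k s \<omega> * volt K w s \<omega>)" by (rule int_prod2[OF ki Vi km Vm])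
  have "integral\<^sup>L (L \<Otimes>\<^sub>M M) (\<lambda>(t, \<omega>). w t \<omega> * Yadj K k t \<omega>) = (\<integral>\<omega>. \<integral>t. w t \<omega> * Yadj K k t \<omega> \<partial>L \<partial>M)"
    using PS.integral_snd[OF I1] by simp
  also have "\<dots> = (\<integral>\<omega>. \<integral>s. k s \<omega> * volt K w s \<omega> \<partial>L \<partial>M)"
  proof (rule integral_cong_AE)
    show "(\<lambda>\<omega>. \<integral>t. w t \<omega> * Yadj K k t \<omega> \<partial>L) \<in> borel_measurable M"
      using PS.integrable_snd[OF I1] by auto
    show "(\<lambda>\<omega>. \<integral>s. k s \<omega> * volt K w s \<omega> \<partial>L) \<in> borel_measurable M"
      using PS.integrable_snd[OF I2] by auto
    have A1: "AE \<omega> in M. integrable L (\<lambda>t. (w t \<omega>)\<^sup>2)"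
      using PS.AE_integrable_snd[OF wi] by simp
    have A2: "AE \<omega> in M. integrable L (\<lambda>t. (k t \<omega>)\<^sup>2)"
      using PS.AE_integrable_snd[OF ki] by simp
    show "AE \<omega> in M. (\<integral>t. w t \<omega> * Yadj K k t \<omega> \<partial>L) = (\<integral>s. k s \<omega> * volt K w s \<omega> \<partial>L)"
      using A1 A2 AE_space
    proof eventually_elim
      case (elim \<omega>)
      show ?case
        by (rule path_fubini[of K C w \<omega> k, OF K sec_meas[OF wm elim(3)] elim(1) sec_meas[OF km elim(3)] elim(2)])
    qed
  qed
  also have "\<dots> = integral\<^sup>L (L \<Otimes>\<^sub>M M) (\<lambda>(s, \<omega>). k s \<omega> * volt K w s \<omega>)"
    using PS.integral_snd[OF I2] by simp
  finally show "integral\<^sup>L (L \<Otimes>\<^sub>M M) (\<lambda>(t, \<omega>). w t \<omega> * Yadj K k t \<omega>) = integral\<^sup>L (L \<Otimes>\<^sub>M M) (\<lambda>(s, \<omega>). k s \<omega> * volt K w s \<omega>)" .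
qed

lemma sfs: "t \<in> {0..T} \<Longrightarrow> sigma_finite_subalgebra M (F t)"
proof -
  assume t: "t \<in> {0..T}"
  interpret finite_measure_subalgebra M "F t"
    using subalg[OF t] by unfold_locales auto
  show ?thesis by unfold_locales
qed

lemma sec_measM:
  assumes "(\<lambda>(s, \<omega>). u s \<omega>) \<in> borel_measurable (L \<Otimes>\<^sub>M M)" "t \<in> space L"
  shows "(\<lambda>\<omega>. u t \<omega>) \<in> borel_measurable M"
  using measurable_compose[OF measurable_Pair1'[of t L M] assms(1)] assms(2) by simp

lemma condexp_part:
  assumes w: "w \<in> L2 M F T"
    and Em: "(\<lambda>(t, \<omega>). E t \<omega>) \<in> borel_measurable (L \<Otimes>\<^sub>M M)"
    and Ym: "(\<lambda>(t, \<omega>). Y t \<omega>) \<in> borel_measurable (L \<Otimes>\<^sub>M M)"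
    and IwY: "integrable (L \<Otimes>\<^sub>M M) (\<lambda>(t, \<omega>). w t \<omega> * Y t \<omega>)"
    and AEE: "\<And>t. t \<in> {0..T} \<Longrightarrow> AE \<omega> in M. E t \<omega> = real_cond_exp M (F t) (\<lambda>\<omega>'. Y t \<omega>') \<omega>"
  shows "integrable (L \<Otimes>\<^sub>M M) (\<lambda>(t, \<omega>). w t \<omega> * E t \<omega>)"
    and "integral\<^sup>L (L \<Otimes>\<^sub>M M) (\<lambda>(t, \<omega>). w t \<omega> * E t \<omega>) = integral\<^sup>L (L \<Otimes>\<^sub>M M) (\<lambda>(t, \<omega>). w t \<omega> * Y t \<omega>)"
proof -
  note wm = L2D(2)[OF w] and wp = L2D(1)[OF w]
  have wEm: "(\<lambda>(t, \<omega>). w t \<omega> * E t \<omega>) \<in> borel_measurable (L \<Otimes>\<^sub>M M)"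
    using borel_measurable_times[OF wm Em] by (simp add: case_prod_beta case_prod_beta')
  have key: "(\<integral>\<^sup>+ \<omega>. ennreal \<bar>w t \<omega>\<bar> * ennreal \<bar>E t \<omega>\<bar> \<partial>M) \<le> (\<integral>\<^sup>+ \<omega>. ennreal \<bar>w t \<omega>\<bar> * ennreal \<bar>Y t \<omega>\<bar> \<partial>M)"
    if t: "t \<in> space L" for t
  proof -
    have t': "t \<in> {0..T}" using t by simp
    interpret S: sigma_finite_subalgebra M "F t" by (rule sfs[OF t'])
    have wF: "(\<lambda>\<omega>. w t \<omega>) \<in> borel_measurable (F t)" by (rule prog_meas_sec[OF wp t'])
    have YM: "(\<lambda>\<omega>. Y t \<omega>) \<in> borel_measurable M" by (rule sec_measM[OF Ym t])
    have "(\<integral>\<^sup>+ \<omega>. ennreal \<bar>w t \<omega>\<bar> * ennreal \<bar>E t \<omega>\<bar> \<partial>M)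
        \<le> (\<integral>\<^sup>+ \<omega>. ennreal \<bar>w t \<omega>\<bar> * nn_cond_exp M (F t) (\<lambda>\<omega>'. ennreal \<bar>Y t \<omega>'\<bar>) \<omega> \<partial>M)"
    proof (rule nn_integral_mono_AE)
      show "AE \<omega> in M. ennreal \<bar>w t \<omega>\<bar> * ennreal \<bar>E t \<omega>\<bar> \<le> ennreal \<bar>w t \<omega>\<bar> * nn_cond_exp M (F t) (\<lambda>\<omega>'. ennreal \<bar>Y t \<omega>'\<bar>) \<omega>"
        using AEE[OF t'] S.real_cond_exp_abs[OF YM]
        by eventually_elim (auto intro: mult_left_mono)
    qed
    also have "\<dots> = (\<integral>\<^sup>+ \<omega>. ennreal \<bar>w t \<omega>\<bar> * ennreal \<bar>Y t \<omega>\<bar> \<partial>M)"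
      by (rule S.nn_cond_exp_intg) (use wF YM in measurable)
    finally show ?thesis .
  qed
  show IwE: "integrable (L \<Otimes>\<^sub>M M) (\<lambda>(t, \<omega>). w t \<omega> * E t \<omega>)"
    unfolding integrable_iff_bounded
  proof
    show "(\<lambda>(t, \<omega>). w t \<omega> * E t \<omega>) \<in> borel_measurable (L \<Otimes>\<^sub>M M)" by (rule wEm)
    have wYm: "(\<lambda>(t, \<omega>). w t \<omega> * Y t \<omega>) \<in> borel_measurable (L \<Otimes>\<^sub>M M)"
      using IwY by auto
    have wm'[measurable]: "(\<lambda>z. w (fst z) (snd z)) \<in> borel_measurable (L \<Otimes>\<^sub>M M)"
      using wm by (simp add: case_prod_beta')
    have Em'[measurable]: "(\<lambda>z. E (fst z) (snd z)) \<in> borel_measurable (L \<Otimes>\<^sub>M M)"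
      using Em by (simp add: case_prod_beta')
    have Ym'[measurable]: "(\<lambda>z. Y (fst z) (snd z)) \<in> borel_measurable (L \<Otimes>\<^sub>M M)"
      using Ym by (simp add: case_prod_beta')
    have m1: "(\<lambda>z. ennreal \<bar>w (fst z) (snd z)\<bar> * ennreal \<bar>E (fst z) (snd z)\<bar>) \<in> borel_measurable (L \<Otimes>\<^sub>M M)"
      by measurable
    have m2: "(\<lambda>z. ennreal \<bar>w (fst z) (snd z)\<bar> * ennreal \<bar>Y (fst z) (snd z)\<bar>) \<in> borel_measurable (L \<Otimes>\<^sub>M M)"
      by measurable
    have "(\<integral>\<^sup>+ z. ennreal (norm ((\<lambda>(t, \<omega>). w t \<omega> * E t \<omega>) z)) \<partial>(L \<Otimes>\<^sub>M M))
        = (\<integral>\<^sup>+ z. ennreal \<bar>w (fst z) (snd z)\<bar> * ennreal \<bar>E (fst z) (snd z)\<bar> \<partial>(L \<Otimes>\<^sub>M M))"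
      by (intro nn_integral_cong) (auto simp: abs_mult ennreal_mult case_prod_beta)
    also have "\<dots> = (\<integral>\<^sup>+ t. \<integral>\<^sup>+ \<omega>. ennreal \<bar>w t \<omega>\<bar> * ennreal \<bar>E t \<omega>\<bar> \<partial>M \<partial>L)"
      using PS.M2.nn_integral_fst[OF m1] by simp
    also have "\<dots> \<le> (\<integral>\<^sup>+ t. \<integral>\<^sup>+ \<omega>. ennreal \<bar>w t \<omega>\<bar> * ennreal \<bar>Y t \<omega>\<bar> \<partial>M \<partial>L)"
      by (intro nn_integral_mono key)
    also have "\<dots> = (\<integral>\<^sup>+ z. ennreal \<bar>w (fst z) (snd z)\<bar> * ennreal \<bar>Y (fst z) (snd z)\<bar> \<partial>(L \<Otimes>\<^sub>M M))"
      using PS.M2.nn_integral_fst[OF m2] by simp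
    also have "\<dots> = (\<integral>\<^sup>+ z. ennreal (norm ((\<lambda>(t, \<omega>). w t \<omega> * Y t \<omega>) z)) \<partial>(L \<Otimes>\<^sub>M M))"
      by (intro nn_integral_cong) (auto simp: abs_mult ennreal_mult case_prod_beta)
    also have "\<dots> < \<infinity>" using IwY unfolding integrable_iff_bounded by simp
    finally show "(\<integral>\<^sup>+ z. ennreal (norm ((\<lambda>(t, \<omega>). w t \<omega> * E t \<omega>) z)) \<partial>(L \<Otimes>\<^sub>M M)) < \<infinity>" .
  qed
  have "integral\<^sup>L (L \<Otimes>\<^sub>M M) (\<lambda>(t, \<omega>). w t \<omega> * E t \<omega>) = (\<integral>t. \<integral>\<omega>. w t \<omega> * E t \<omega> \<partial>M \<partial>L)"
    using PS.integral_fst[OF IwE] by simp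
  also have "\<dots> = (\<integral>t. \<integral>\<omega>. w t \<omega> * Y t \<omega> \<partial>M \<partial>L)"
  proof (rule integral_cong_AE)
    show "(\<lambda>t. \<integral>\<omega>. w t \<omega> * E t \<omega> \<partial>M) \<in> borel_measurable L"
      using PS.integrable_fst[OF IwE] by auto
    show "(\<lambda>t. \<integral>\<omega>. w t \<omega> * Y t \<omega> \<partial>M) \<in> borel_measurable L"
      using PS.integrable_fst[OF IwY] by auto
    show "AE t in L. (\<integral>\<omega>. w t \<omega> * E t \<omega> \<partial>M) = (\<integral>\<omega>. w t \<omega> * Y t \<omega> \<partial>M)"
      using PS.AE_integrable_fst[OF IwY] AE_space
    proof eventually_elim
      case (elim t)
      have t': "t \<in> {0..T}" using elim(2) by simp
      interpret S: sigma_finite_subalgebra M "F t" by (rule sfs[OF t'])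
      have wF: "(\<lambda>\<omega>. w t \<omega>) \<in> borel_measurable (F t)" by (rule prog_meas_sec[OF wp t'])
      have YM: "(\<lambda>\<omega>. Y t \<omega>) \<in> borel_measurable M" by (rule sec_measM[OF Ym elim(2)])
      have EM: "(\<lambda>\<omega>. E t \<omega>) \<in> borel_measurable M" by (rule sec_measM[OF Em elim(2)])
      have wM: "(\<lambda>\<omega>. w t \<omega>) \<in> borel_measurable M" by (rule sec_measM[OF wm elim(2)])
      have "(\<integral>\<omega>. w t \<omega> * E t \<omega> \<partial>M) = (\<integral>\<omega>. w t \<omega> * real_cond_exp M (F t) (\<lambda>\<omega>'. Y t \<omega>') \<omega> \<partial>M)"
      proof (rule integral_cong_AE)
        show "(\<lambda>\<omega>. w t \<omega> * E t \<omega>) \<in> borel_measurable M" using wM EM by measurable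
        show "(\<lambda>\<omega>. w t \<omega> * real_cond_exp M (F t) (\<lambda>\<omega>'. Y t \<omega>') \<omega>) \<in> borel_measurable M"
          using wM by measurable
        show "AE \<omega> in M. w t \<omega> * E t \<omega> = w t \<omega> * real_cond_exp M (F t) (\<lambda>\<omega>'. Y t \<omega>') \<omega>"
          using AEE[OF t'] by eventually_elim simp
      qed
      also have "\<dots> = (\<integral>\<omega>. w t \<omega> * Y t \<omega> \<partial>M)"
        by (rule S.real_cond_exp_intg(2)) (use elim(1) wF YM in auto)
      finally show ?case .
    qed
  qed
  also have "\<dots> = integral\<^sup>L (L \<Otimes>\<^sub>M M) (\<lambda>(t, \<omega>). w t \<omega> * Y t \<omega>)"
    using PS.integral_fst[OF IwY] by simp
  finally show "integral\<^sup>L (L \<Otimes>\<^sub>M M) (\<lambda>(t, \<omega>). w t \<omega> * E t \<omega>) = integral\<^sup>L (L \<Otimes>\<^sub>M M) (\<lambda>(t, \<omega>). w t \<omega> * Y t \<omega>)" .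
qed

end

context fsetting begin

abbreviation "Q \<equiv> L \<Otimes>\<^sub>M M"

lemma finQ: "finite_measure Q"
proof (rule finite_measureI)
  have "emeasure Q (space L \<times> space M) = emeasure L (space L) * emeasure M (space M)"
    by (rule PS.M2.emeasure_pair_measure_Times) (rule sets.top)+
  then have "emeasure Q (space Q) = emeasure L (space L) * emeasure M (space M)"
    by (simp only: space_pair_measure)
  then show "emeasure Q (space Q) \<noteq> \<infinity>" using emL by (simp add: ennreal_mult_eq_top_iff)
qed

definition sqi :: "(real \<times> 'a \<Rightarrow> real) \<Rightarrow> bool" where
  "sqi f \<longleftrightarrow> f \<in> borel_measurable Q \<and> integrable Q (\<lambda>z. (f z)\<^sup>2)"

lemma sqi_lin: "sqi f \<Longrightarrow> sqi g \<Longrightarrow> sqi (\<lambda>z. a * f z + b * g z)"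
  unfolding sqi_def
proof (elim conjE, intro conjI)
  assume fm: "f \<in> borel_measurable Q" and gm: "g \<in> borel_measurable Q"
    and fi: "integrable Q (\<lambda>z. (f z)\<^sup>2)" and gi: "integrable Q (\<lambda>z. (g z)\<^sup>2)"
  show m: "(\<lambda>z. a * f z + b * g z) \<in> borel_measurable Q" using fm gm by measurable
  show "integrable Q (\<lambda>z. (a * f z + b * g z)\<^sup>2)"
  proof (rule Bochner_Integration.integrable_bound)
    show "integrable Q (\<lambda>z. 2 * a\<^sup>2 * (f z)\<^sup>2 + 2 * b\<^sup>2 * (g z)\<^sup>2)" using fi gi by auto
    show "(\<lambda>z. (a * f z + b * g z)\<^sup>2) \<in> borel_measurable Q" using m by measurable
    show "AE z in Q. norm ((a * f z + b * g z)\<^sup>2) \<le> norm (2 * a\<^sup>2 * (f z)\<^sup>2 + 2 * b\<^sup>2 * (g z)\<^sup>2)"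
      by (intro AE_I2 norm_le_of sum_sq_le) simp
  qed
qed

lemma sqi_const: "sqi (\<lambda>z. c)"
proof -
  interpret finite_measure Q by (rule finQ)
  show ?thesis unfolding sqi_def by auto
qed

lemma sqi_prod: "sqi f \<Longrightarrow> sqi g \<Longrightarrow> integrable Q (\<lambda>z. f z * g z)"
  unfolding sqi_def by (intro int_prod) auto

lemma sqi_abs_prod: "sqi f \<Longrightarrow> sqi g \<Longrightarrow> integrable Q (\<lambda>z. \<bar>f z\<bar> * \<bar>g z\<bar>)"
  using integrable_abs[OF sqi_prod[of f g]] by (simp add: abs_mult)

lemma sqi_bound:
  assumes "sqi f" "g \<in> borel_measurable Q" "\<And>z. \<bar>g z\<bar> \<le> c * \<bar>f z\<bar>"
  shows "sqi g"
  unfolding sqi_def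
proof
  show "g \<in> borel_measurable Q" by fact
  show "integrable Q (\<lambda>z. (g z)\<^sup>2)"
  proof (rule Bochner_Integration.integrable_bound)
    show "integrable Q (\<lambda>z. c\<^sup>2 * (f z)\<^sup>2)" using assms(1) unfolding sqi_def by auto
    show "(\<lambda>z. (g z)\<^sup>2) \<in> borel_measurable Q" using assms(2) by measurable
    show "AE z in Q. norm ((g z)\<^sup>2) \<le> norm (c\<^sup>2 * (f z)\<^sup>2)"
    proof (rule AE_I2)
      fix z
      have "\<bar>g z\<bar>\<^sup>2 \<le> (c * \<bar>f z\<bar>)\<^sup>2" using assms(3)[of z] by (intro power_mono) auto
      then show "norm ((g z)\<^sup>2) \<le> norm (c\<^sup>2 * (f z)\<^sup>2)" by (simp add: power_mult_distrib)
    qed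
  qed
qed

lemma sqi_L2: "u \<in> L2 M F T \<Longrightarrow> sqi (\<lambda>z. u (fst z) (snd z))"
  unfolding sqi_def using L2D(2,3)[of u] by (simp add: case_prod_beta')

lemma sqi_volt: "kern_ok K C \<Longrightarrow> u \<in> L2 M F T \<Longrightarrow> sqi (\<lambda>z. volt K u (fst z) (snd z))"
  unfolding sqi_def using volt_meas[OF _ L2D(2)] volt_sq_int by (simp add: case_prod_beta')

end

locale msetting = fsetting M F T + hsetting h h' Bh
  for M :: "'a measure" and F T h h' Bh +
  fixes G :: "real \<Rightarrow> real \<Rightarrow> real" and CG :: real and g :: "'a proc"
  assumes G: "kern_ok G CG" and gL2: "g \<in> L2 M F T"
begin

lemma sqi_h: "sqi f \<Longrightarrow> sqi (\<lambda>z. h (f z))"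
proof -
  assume f: "sqi f"
  have fm: "f \<in> borel_measurable Q" using f by (simp add: sqi_def)
  have s: "sqi (\<lambda>z. \<bar>h 0\<bar> * 1 + Bh * \<bar>f z\<bar>)"
  proof (rule sqi_lin[OF sqi_const])
    show "sqi (\<lambda>z. \<bar>f z\<bar>)" by (rule sqi_bound[OF f, of _ 1]) (use fm in auto)
  qed
  show ?thesis
  proof (rule sqi_bound[OF s, of _ 1])
    show "(\<lambda>z. h (f z)) \<in> borel_measurable Q" using fm by measurable
    show "\<bar>h (f z)\<bar> \<le> 1 * \<bar>\<bar>h 0\<bar> * 1 + Bh * \<bar>f z\<bar>\<bar>" for z
      using h_lin_bound[of "f z"] Bh_nn by simp
  qed
qed

lemma sqi_Z: "u \<in> L2 M F T \<Longrightarrow> sqi (\<lambda>z. Zproc g G u (fst z) (snd z))"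
  using sqi_lin[OF sqi_L2[OF gL2] sqi_volt[OF G], of u 1 1] by (simp add: Zproc_def)

end

context msetting begin

definition uy :: "'a proc \<Rightarrow> 'a proc \<Rightarrow> real \<Rightarrow> 'a proc" where
  "uy u v y = (\<lambda>t \<omega>. y * u t \<omega> + (1 - y) * v t \<omega>)"

definition aa where "aa v z = Zproc g G v (fst z) (snd z)"
definition bb where "bb u v z = volt G u (fst z) (snd z) - volt G v (fst z) (snd z)"
definition cc where "cc v z = v (fst z) (snd z)"
definition dd where "dd u v z = u (fst z) (snd z) - v (fst z) (snd z)"

definition \<phi> where "\<phi> u v y = (\<integral>z. h (aa v z + y * bb u v z) * (cc v z + y * dd u v z) \<partial>Q)"
definition DD where "DD u v y = (\<integral>z. h' (aa v z + y * bb u v z) * bb u v z * (cc v z + y * dd u v z) + h (aa v z + y * bb u v z) * dd u v z \<partial>Q)"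

lemma uy_L2: "u \<in> L2 M F T \<Longrightarrow> v \<in> L2 M F T \<Longrightarrow> uy u v y \<in> L2 M F T"
  unfolding uy_def by (rule L2_lin)

lemma good_AE:
  assumes u: "u \<in> L2 M F T" and v: "v \<in> L2 M F T"
  shows "AE z in Q. (\<forall>y. Zproc g G (uy u v y) (fst z) (snd z) = aa v z + y * bb u v z)
     \<and> volt G (pdiff u v) (fst z) (snd z) = bb u v z"
proof -
  have A: "AE \<omega> in M. \<omega> \<in> space M \<and> integrable L (\<lambda>s. (u s \<omega>)\<^sup>2) \<and> integrable L (\<lambda>s. (v s \<omega>)\<^sup>2)"
    using L2_AE[OF u] L2_AE[OF v] AE_space by eventually_elim auto
  have "AE z in Q. snd z \<in> space M \<and> integrable L (\<lambda>s. (u s (snd z))\<^sup>2) \<and> integrable L (\<lambda>s. (v s (snd z))\<^sup>2)"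
    by (rule AE_lift[OF A])
  then show ?thesis using AE_space
  proof eventually_elim
    case (elim z)
    obtain t \<omega> where z: "z = (t, \<omega>)" by (cases z)
    have t: "t \<in> {0..T}" using elim(2) z by (auto simp: space_pair_measure)
    have \<omega>: "\<omega> \<in> space M" using elim(1) z by simp
    have um: "(\<lambda>s. u s \<omega>) \<in> borel_measurable L" by (rule sec_meas[OF L2D(2)[OF u] \<omega>])
    have vm: "(\<lambda>s. v s \<omega>) \<in> borel_measurable L" by (rule sec_meas[OF L2D(2)[OF v] \<omega>])
    have ui: "integrable L (\<lambda>s. (u s \<omega>)\<^sup>2)" and vi: "integrable L (\<lambda>s. (v s \<omega>)\<^sup>2)" using elim(1) z by auto
    have "Zproc g G (uy u v y) t \<omega> = aa v z + y * bb u v z" for y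
      using volt_lin[of G CG t u \<omega> v y "1 - y", OF G t um ui vm vi] z
      by (simp add: Zproc_def uy_def aa_def bb_def algebra_simps)
    moreover have "volt G (pdiff u v) t \<omega> = bb u v z"
      using volt_lin[of G CG t u \<omega> v 1 "-1", OF G t um ui vm vi] z
      by (simp add: pdiff_def bb_def)
    ultimately show ?case using z by simp
  qed
qed

lemma sqi_abcd:
  assumes u: "u \<in> L2 M F T" and v: "v \<in> L2 M F T"
  shows "sqi (aa v)" "sqi (bb u v)" "sqi (cc v)" "sqi (dd u v)"
proof -
  show "sqi (aa v)" unfolding aa_def by (rule sqi_Z[OF v])
  show "sqi (bb u v)" unfolding bb_def using sqi_lin[OF sqi_volt[OF G u] sqi_volt[OF G v], of 1 "-1"] by simp
  show "sqi (cc v)" unfolding cc_def by (rule sqi_L2[OF v])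
  show "sqi (dd u v)" unfolding dd_def using sqi_lin[OF sqi_L2[OF u] sqi_L2[OF v], of 1 "-1"] by simp
qed

lemma hasD:
  assumes u: "u \<in> L2 M F T" and v: "v \<in> L2 M F T"
  shows "(\<phi> u v has_real_derivative DD u v x) (at x)"
proof -
  note s = sqi_abcd[OF u v]
  have m: "aa v \<in> borel_measurable Q" "bb u v \<in> borel_measurable Q" "cc v \<in> borel_measurable Q" "dd u v \<in> borel_measurable Q"
    using s unfolding sqi_def by auto
  have i3: "integrable Q (\<lambda>z. h (aa v z + y * bb u v z) * (cc v z + y * dd u v z))" for y
    using sqi_prod[OF sqi_h[OF sqi_lin[OF s(1) s(2), of 1 y]] sqi_lin[OF s(3) s(4), of 1 y]] by simp
  have i4: "integrable Q (\<lambda>z. h (aa v z + x * bb u v z) * dd u v z)"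
    using sqi_prod[OF sqi_h[OF sqi_lin[OF s(1) s(2), of 1 x]] s(4)] by simp
  have "((\<lambda>y. \<integral>z. h (aa v z + y * bb u v z) * (cc v z + y * dd u v z) \<partial>Q) has_real_derivative
          (\<integral>z. h' (aa v z + x * bb u v z) * bb u v z * (cc v z + x * dd u v z) + h (aa v z + x * bb u v z) * dd u v z \<partial>Q)) (at x)"
    by (rule deriv_under[OF m sqi_abs_prod[OF s(2) s(3)] sqi_abs_prod[OF s(2) s(4)] i3 i4])
  then show ?thesis unfolding \<phi>_def[abs_def] DD_def .
qed


lemma D_eq:
  assumes u: "u \<in> L2 M F T" and v: "v \<in> L2 M F T" and A: "A_version M F T h h' G g Aop"
  shows "integrable Q (\<lambda>z. pdiff u v (fst z) (snd z) * Aop (uy u v y) (fst z) (snd z))"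
    and "DD u v y = ip M T (pdiff u v) (Aop (uy u v y))"
proof -
  define p where "p = uy u v y"
  have pL: "p \<in> L2 M F T" unfolding p_def by (rule uy_L2[OF u v])
  define w where "w = pdiff u v"
  have wL: "w \<in> L2 M F T" unfolding w_def by (rule L2_pdiff[OF u v])
  define k where "k = (\<lambda>s \<omega>. h' (Zproc g G p s \<omega>) * p s \<omega>)"
  have sZ: "sqi (\<lambda>z. Zproc g G p (fst z) (snd z))" by (rule sqi_Z[OF pL])
  have sp: "sqi (\<lambda>z. p (fst z) (snd z))" by (rule sqi_L2[OF pL])
  have sw: "sqi (\<lambda>z. w (fst z) (snd z))" by (rule sqi_L2[OF wL])
  have sk: "sqi (\<lambda>z. k (fst z) (snd z))"
  proof (rule sqi_bound[OF sp, of _ Bh])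
    have [measurable]: "(\<lambda>z. Zproc g G p (fst z) (snd z)) \<in> borel_measurable Q" "(\<lambda>z. p (fst z) (snd z)) \<in> borel_measurable Q"
      using sZ sp unfolding sqi_def by auto
    show "(\<lambda>z. k (fst z) (snd z)) \<in> borel_measurable Q" unfolding k_def by measurable
    show "\<bar>k (fst z) (snd z)\<bar> \<le> Bh * \<bar>p (fst z) (snd z)\<bar>" for z
      unfolding k_def abs_mult by (intro mult_right_mono hb) simp
  qed
  have km: "(\<lambda>(s, \<omega>). k s \<omega>) \<in> borel_measurable Q" using sk unfolding sqi_def by (simp add: case_prod_beta')
  have ki: "integrable Q (\<lambda>(s, \<omega>). (k s \<omega>)\<^sup>2)" using sk unfolding sqi_def by (simp add: case_prod_beta')
  have shZ: "sqi (\<lambda>z. h (Zproc g G p (fst z) (snd z)))" by (rule sqi_h[OF sZ])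
  define E where "E = (\<lambda>t \<omega>. Aop p t \<omega> - h (Zproc g G p t \<omega>))"
  have Ap: "progressive F T (Aop p)" using A pL unfolding A_version_def by blast
  have Em: "(\<lambda>(t, \<omega>). E t \<omega>) \<in> borel_measurable Q"
  proof -
    have [measurable]: "(\<lambda>z. Aop p (fst z) (snd z)) \<in> borel_measurable Q"
      using prog_meas[OF Ap] by (simp add: case_prod_beta')
    have [measurable]: "(\<lambda>z. h (Zproc g G p (fst z) (snd z))) \<in> borel_measurable Q"
      using shZ unfolding sqi_def by auto
    show ?thesis unfolding E_def case_prod_beta' by measurable
  qed
  have AEE: "AE \<omega> in M. E t \<omega> = real_cond_exp M (F t) (\<lambda>\<omega>'. Yadj G k t \<omega>') \<omega>" if t: "t \<in> {0..T}" for t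
  proof -
    have "AE \<omega> in M. Aop p t \<omega> = h (Zproc g G p t \<omega>)
             + real_cond_exp M (F t) (\<lambda>\<omega>'. (LINT s:{t..T}|lborel. G s t * (h' (Zproc g G p s \<omega>') * p s \<omega>'))) \<omega>"
      using A pL t unfolding A_version_def by blast
    moreover have "(\<lambda>\<omega>'. (LINT s:{t..T}|lborel. G s t * (h' (Zproc g G p s \<omega>') * p s \<omega>'))) = (\<lambda>\<omega>'. Yadj G k t \<omega>')"
    proof
      fix \<omega>'
      show "(LINT s:{t..T}|lborel. G s t * (h' (Zproc g G p s \<omega>') * p s \<omega>')) = Yadj G k t \<omega>'"
        using Yadj_L[OF t, of G k \<omega>'] by (simp add: k_def)
    qed
    ultimately have "AE \<omega> in M. Aop p t \<omega> = h (Zproc g G p t \<omega>) + real_cond_exp M (F t) (\<lambda>\<omega>'. Yadj G k t \<omega>') \<omega>"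
      by simp
    then show ?thesis by eventually_elim (simp add: E_def)
  qed
  have Ym: "(\<lambda>(t, \<omega>). Yadj G k t \<omega>) \<in> borel_measurable Q" by (rule Yadj_meas[OF G km])
  note adj = adj_identity[OF G wL km ki]
  note cp = condexp_part[OF wL Em Ym adj(1) AEE]
  have IwhZ: "integrable Q (\<lambda>z. w (fst z) (snd z) * h (Zproc g G p (fst z) (snd z)))"
    by (rule sqi_prod[OF sw shZ])
  have IwE: "integrable Q (\<lambda>z. w (fst z) (snd z) * E (fst z) (snd z))"
    using cp(1) by (simp add: case_prod_beta')
  have eA: "w (fst z) (snd z) * Aop p (fst z) (snd z) = w (fst z) (snd z) * h (Zproc g G p (fst z) (snd z)) + w (fst z) (snd z) * E (fst z) (snd z)" for z
    by (simp add: E_def algebra_simps)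
  show IwA: "integrable Q (\<lambda>z. pdiff u v (fst z) (snd z) * Aop (uy u v y) (fst z) (snd z))"
    unfolding w_def[symmetric] p_def[symmetric] eA using IwhZ IwE by auto
  have ipe: "ip M T w (Aop p) = (\<integral>z. w (fst z) (snd z) * h (Zproc g G p (fst z) (snd z)) \<partial>Q) + (\<integral>z. w (fst z) (snd z) * E (fst z) (snd z) \<partial>Q)"
    unfolding ip_def PM_def case_prod_beta' eA using IwhZ IwE by simp
  have wEY: "(\<integral>z. w (fst z) (snd z) * E (fst z) (snd z) \<partial>Q) = (\<integral>z. k (fst z) (snd z) * volt G w (fst z) (snd z) \<partial>Q)"
    using cp(2) adj(3) by (simp add: case_prod_beta')
  note s = sqi_abcd[OF u v]
  have i1: "integrable Q (\<lambda>z. h' (aa v z + y * bb u v z) * bb u v z * (cc v z + y * dd u v z))"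
  proof (rule Bochner_Integration.integrable_bound)
    show "integrable Q (\<lambda>z. Bh * (\<bar>bb u v z\<bar> * \<bar>cc v z + y * dd u v z\<bar>))"
      using sqi_abs_prod[OF s(2) sqi_lin[OF s(3) s(4), of 1 y]] by simp
    have [measurable]: "aa v \<in> borel_measurable Q" "bb u v \<in> borel_measurable Q" "cc v \<in> borel_measurable Q" "dd u v \<in> borel_measurable Q"
      using s unfolding sqi_def by auto
    show "(\<lambda>z. h' (aa v z + y * bb u v z) * bb u v z * (cc v z + y * dd u v z)) \<in> borel_measurable Q" by measurable
    show "AE z in Q. norm (h' (aa v z + y * bb u v z) * bb u v z * (cc v z + y * dd u v z)) \<le> norm (Bh * (\<bar>bb u v z\<bar> * \<bar>cc v z + y * dd u v z\<bar>))"
    proof (rule AE_I2)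
      fix z
      have "\<bar>h' (aa v z + y * bb u v z)\<bar> * (\<bar>bb u v z\<bar> * \<bar>cc v z + y * dd u v z\<bar>) \<le> Bh * (\<bar>bb u v z\<bar> * \<bar>cc v z + y * dd u v z\<bar>)"
        by (intro mult_right_mono hb) simp
      then show "norm (h' (aa v z + y * bb u v z) * bb u v z * (cc v z + y * dd u v z)) \<le> norm (Bh * (\<bar>bb u v z\<bar> * \<bar>cc v z + y * dd u v z\<bar>))"
        using Bh_nn by (simp add: abs_mult mult.assoc)
    qed
  qed
  have i2: "integrable Q (\<lambda>z. h (aa v z + y * bb u v z) * dd u v z)"
    using sqi_prod[OF sqi_h[OF sqi_lin[OF s(1) s(2), of 1 y]] s(4)] by simp
  have "DD u v y = (\<integral>z. h' (aa v z + y * bb u v z) * bb u v z * (cc v z + y * dd u v z) \<partial>Q) + (\<integral>z. h (aa v z + y * bb u v z) * dd u v z \<partial>Q)"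
    unfolding DD_def using i1 i2 by simp
  also have "(\<integral>z. h' (aa v z + y * bb u v z) * bb u v z * (cc v z + y * dd u v z) \<partial>Q) = (\<integral>z. k (fst z) (snd z) * volt G w (fst z) (snd z) \<partial>Q)"
  proof (rule integral_cong_AE)
    show "(\<lambda>z. h' (aa v z + y * bb u v z) * bb u v z * (cc v z + y * dd u v z)) \<in> borel_measurable Q"
      using i1 by auto
    show "(\<lambda>z. k (fst z) (snd z) * volt G w (fst z) (snd z)) \<in> borel_measurable Q"
    proof -
      have m1: "(\<lambda>z. k (fst z) (snd z)) \<in> borel_measurable Q" using sk unfolding sqi_def by auto
      have m2: "(\<lambda>z. volt G w (fst z) (snd z)) \<in> borel_measurable Q" using sqi_volt[OF G wL] unfolding sqi_def by auto
      show ?thesis using borel_measurable_times[OF m1 m2] by simp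
    qed
    show "AE z in Q. h' (aa v z + y * bb u v z) * bb u v z * (cc v z + y * dd u v z) = k (fst z) (snd z) * volt G w (fst z) (snd z)"
      using good_AE[OF u v] by eventually_elim (auto simp: k_def p_def w_def uy_def cc_def dd_def algebra_simps)
  qed
  also have "(\<integral>z. h (aa v z + y * bb u v z) * dd u v z \<partial>Q) = (\<integral>z. w (fst z) (snd z) * h (Zproc g G p (fst z) (snd z)) \<partial>Q)"
  proof (rule integral_cong_AE)
    show "(\<lambda>z. h (aa v z + y * bb u v z) * dd u v z) \<in> borel_measurable Q" using i2 by auto
    show "(\<lambda>z. w (fst z) (snd z) * h (Zproc g G p (fst z) (snd z))) \<in> borel_measurable Q" using IwhZ by auto
    show "AE z in Q. h (aa v z + y * bb u v z) * dd u v z = w (fst z) (snd z) * h (Zproc g G p (fst z) (snd z))"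
      using good_AE[OF u v] by eventually_elim (auto simp: p_def w_def dd_def pdiff_def)
  qed
  finally show "DD u v y = ip M T (pdiff u v) (Aop (uy u v y))"
    unfolding w_def[symmetric] p_def[symmetric] ipe wEY by simp
qed


lemma D_mono:
  assumes u: "u \<in> L2 M F T" and v: "v \<in> L2 M F T" and A: "A_version M F T h h' G g Aop"
    and mono: "monotone_op M F T Aop" and y: "y1 \<le> y2"
  shows "DD u v y1 \<le> DD u v y2"
proof (cases "y1 = y2")
  case True then show ?thesis by simp
next
  case False
  with y have c: "0 < y2 - y1" by simp
  define w where "w = pdiff u v"
  define A1 where "A1 = Aop (uy u v y1)"
  define A2 where "A2 = Aop (uy u v y2)"
  have e: "pdiff (uy u v y2) (uy u v y1) = (\<lambda>t \<omega>. (y2 - y1) * w t \<omega>)"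
    by (simp add: fun_eq_iff uy_def pdiff_def w_def algebra_simps)
  have "0 \<le> ip M T (pdiff (uy u v y2) (uy u v y1)) (pdiff A2 A1)"
    using mono uy_L2[OF u v] unfolding monotone_op_def A1_def A2_def by blast
  also have "ip M T (pdiff (uy u v y2) (uy u v y1)) (pdiff A2 A1) = (y2 - y1) * (\<integral>z. w (fst z) (snd z) * A2 (fst z) (snd z) - w (fst z) (snd z) * A1 (fst z) (snd z) \<partial>Q)"
  proof -
    have "(\<lambda>(s, \<omega>). (y2 - y1) * w s \<omega> * pdiff A2 A1 s \<omega>) = (\<lambda>z. (y2 - y1) * (w (fst z) (snd z) * A2 (fst z) (snd z) - w (fst z) (snd z) * A1 (fst z) (snd z)))"
      by (simp add: fun_eq_iff pdiff_def algebra_simps)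
    then show ?thesis unfolding ip_def PM_def e by simp
  qed
  also have "(\<integral>z. w (fst z) (snd z) * A2 (fst z) (snd z) - w (fst z) (snd z) * A1 (fst z) (snd z) \<partial>Q) = DD u v y2 - DD u v y1"
  proof -
    have I1: "integrable Q (\<lambda>z. w (fst z) (snd z) * A1 (fst z) (snd z))"
      unfolding w_def A1_def by (rule D_eq(1)[OF u v A])
    have I2: "integrable Q (\<lambda>z. w (fst z) (snd z) * A2 (fst z) (snd z))"
      unfolding w_def A2_def by (rule D_eq(1)[OF u v A])
    have "(\<integral>z. w (fst z) (snd z) * A2 (fst z) (snd z) - w (fst z) (snd z) * A1 (fst z) (snd z) \<partial>Q)
        = (\<integral>z. w (fst z) (snd z) * A2 (fst z) (snd z) \<partial>Q) - (\<integral>z. w (fst z) (snd z) * A1 (fst z) (snd z) \<partial>Q)"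
      using I1 I2 by simp
    also have "\<dots> = DD u v y2 - DD u v y1"
      using D_eq(2)[OF u v A, of y1] D_eq(2)[OF u v A, of y2]
      unfolding ip_def PM_def A1_def A2_def w_def by (simp add: case_prod_beta')
    finally show ?thesis .
  qed
  finally have "0 \<le> (y2 - y1) * (DD u v y2 - DD u v y1)" .
  then show ?thesis using c by (simp add: zero_le_mult_iff)
qed

lemma phi_convex:
  assumes u: "u \<in> L2 M F T" and v: "v \<in> L2 M F T" and A: "A_version M F T h h' G g Aop"
    and mono: "monotone_op M F T Aop"
  shows "convex_on UNIV (\<phi> u v)"
  by (rule convex_on_realI[where f' = "DD u v"]) (auto intro: hasD[OF u v] D_mono[OF u v A mono])

definition Phi where "Phi p = (\<integral>z. h (Zproc g G p (fst z) (snd z)) * p (fst z) (snd z) \<partial>Q)"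

lemma Phi_eq:
  assumes u: "u \<in> L2 M F T" and v: "v \<in> L2 M F T"
  shows "Phi (uy u v y) = \<phi> u v y"
  unfolding Phi_def \<phi>_def
proof (rule integral_cong_AE)
  note s = sqi_abcd[OF u v]
  show "(\<lambda>z. h (Zproc g G (uy u v y) (fst z) (snd z)) * uy u v y (fst z) (snd z)) \<in> borel_measurable Q"
    using sqi_prod[OF sqi_h[OF sqi_Z[OF uy_L2[OF u v]]] sqi_L2[OF uy_L2[OF u v]]] by auto
  show "(\<lambda>z. h (aa v z + y * bb u v z) * (cc v z + y * dd u v z)) \<in> borel_measurable Q"
    using sqi_prod[OF sqi_h[OF sqi_lin[OF s(1) s(2), of 1 y]] sqi_lin[OF s(3) s(4), of 1 y]] by auto
  show "AE z in Q. h (Zproc g G (uy u v y) (fst z) (snd z)) * uy u v y (fst z) (snd z) = h (aa v z + y * bb u v z) * (cc v z + y * dd u v z)"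
    using good_AE[OF u v] by eventually_elim (auto simp: uy_def cc_def dd_def algebra_simps)
qed

lemma Phi_convex:
  assumes u: "u \<in> L2 M F T" and v: "v \<in> L2 M F T" and A: "A_version M F T h h' G g Aop"
    and mono: "monotone_op M F T Aop" and th: "0 \<le> \<theta>" "\<theta> \<le> 1"
  shows "Phi (uy u v \<theta>) \<le> \<theta> * Phi u + (1 - \<theta>) * Phi v"
proof -
  have c: "convex_on UNIV (\<phi> u v)" by (rule phi_convex[OF u v A mono])
  have "\<phi> u v (\<theta> *\<^sub>R 1 + (1 - \<theta>) *\<^sub>R 0) \<le> \<theta> * \<phi> u v 1 + (1 - \<theta>) * \<phi> u v 0"
    using c th unfolding convex_on_def by (metis UNIV_I diff_ge_0_iff_ge le_add_diff_inverse)
  moreover have "uy u v 1 = u" "uy u v 0 = v" by (auto simp: uy_def fun_eq_iff)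
  ultimately show ?thesis using Phi_eq[OF u v] by (metis add.right_neutral mult.right_neutral real_scaleR_def scale_zero_right)
qed

end

context fsetting begin

lemma int_snd_Q:
  fixes f :: "'a \<Rightarrow> real"
  assumes "integrable M f"
  shows "integrable Q (\<lambda>z. f (snd z))"
  unfolding integrable_iff_bounded
proof
  have [measurable]: "f \<in> borel_measurable M" using assms by auto
  show "(\<lambda>z. f (snd z)) \<in> borel_measurable Q" by measurable
  have "(\<integral>\<^sup>+ z. ennreal (norm (f (snd z))) \<partial>Q) = ennreal T * (\<integral>\<^sup>+ \<omega>. ennreal (norm (f \<omega>)) \<partial>M)"
    by (rule nn_snd_const) measurable
  also have "\<dots> < \<infinity>" using assms unfolding integrable_iff_bounded by (simp add: ennreal_mult_less_top)
  finally show "(\<integral>\<^sup>+ z. ennreal (norm (f (snd z))) \<partial>Q) < \<infinity>" .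
qed

lemma alpha_t_bound:
  assumes Xm: "X \<in> borel_measurable M" and t: "t \<in> {0..T}"
    and ae: "AE \<omega> in M. a \<omega> = real_cond_exp M (F t) X \<omega>" and am: "a \<in> borel_measurable M"
  shows "(\<integral>\<^sup>+ \<omega>. ennreal ((a \<omega>)\<^sup>2) \<partial>M) \<le> (\<integral>\<^sup>+ \<omega>. ennreal ((X \<omega>)\<^sup>2) \<partial>M)"
proof (cases "integrable M (\<lambda>\<omega>. (X \<omega>)\<^sup>2)")
  case False
  then have "(\<integral>\<^sup>+ \<omega>. ennreal ((X \<omega>)\<^sup>2) \<partial>M) = \<infinity>"
    using Xm by (auto simp: integrable_iff_bounded less_top[symmetric])
  then show ?thesis by simp
next
  case True
  interpret S: sigma_finite_subalgebra M "F t" by (rule sfs[OF t])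
  have Xi: "integrable M X" by (rule int_sq_imp_int[OF MP.finite_measure_axioms True Xm])
  have jen: "AE \<omega> in M. (real_cond_exp M (F t) X \<omega>)\<^sup>2 \<le> real_cond_exp M (F t) (\<lambda>\<omega>. (X \<omega>)\<^sup>2) \<omega>"
    using S.real_cond_exp_jensens_inequality(2)[of X UNIV 0 0 power2] Xi True convex_power2 by auto
  have ci: "integrable M (\<lambda>\<omega>. (real_cond_exp M (F t) X \<omega>)\<^sup>2)"
    using S.integrable_convex_cond_exp[of X UNIV 0 0 power2] Xi True convex_power2 by auto
  have "(\<integral>\<^sup>+ \<omega>. ennreal ((a \<omega>)\<^sup>2) \<partial>M) = (\<integral>\<^sup>+ \<omega>. ennreal ((real_cond_exp M (F t) X \<omega>)\<^sup>2) \<partial>M)"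
    using ae by (intro nn_integral_cong_AE) auto
  also have "\<dots> = ennreal (\<integral>\<omega>. (real_cond_exp M (F t) X \<omega>)\<^sup>2 \<partial>M)"
    by (rule nn_integral_eq_integral[OF ci]) simp
  also have "\<dots> \<le> ennreal (\<integral>\<omega>. real_cond_exp M (F t) (\<lambda>\<omega>. (X \<omega>)\<^sup>2) \<omega> \<partial>M)"
    by (intro ennreal_leI integral_mono_AE ci jen S.real_cond_exp_int(1)[OF True])
  also have "(\<integral>\<omega>. real_cond_exp M (F t) (\<lambda>\<omega>. (X \<omega>)\<^sup>2) \<omega> \<partial>M) = (\<integral>\<omega>. (X \<omega>)\<^sup>2 \<partial>M)"
    by (rule S.real_cond_exp_int(2)[OF True])
  also have "ennreal (\<integral>\<omega>. (X \<omega>)\<^sup>2 \<partial>M) = (\<integral>\<^sup>+ \<omega>. ennreal ((X \<omega>)\<^sup>2) \<partial>M)"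
    by (rule nn_integral_eq_integral[OF True, symmetric]) simp
  finally show ?thesis .
qed

lemma alpha_sqi:
  assumes S: "S \<in> L2 M F T" and STm: "S T \<in> borel_measurable (F T)"
    and STi: "integrable M (\<lambda>\<omega>. (S T \<omega>)\<^sup>2)" and al: "alpha_version M F T S alpha"
  shows "sqi (\<lambda>z. alpha (fst z) (snd z))"
  unfolding sqi_def
proof
  have ap: "progressive F T alpha" using al unfolding alpha_version_def by blast
  have am: "(\<lambda>(s, \<omega>). alpha s \<omega>) \<in> borel_measurable Q" by (rule prog_meas[OF ap])
  show am': "(\<lambda>z. alpha (fst z) (snd z)) \<in> borel_measurable Q" using am by (simp add: case_prod_beta')
  have STM[measurable]: "S T \<in> borel_measurable M" using measurable_from_subalg[OF subalg STm] T_pos by auto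
  note Sm = L2D(2)[OF S]
  have Sm'[measurable]: "(\<lambda>z. S (fst z) (snd z)) \<in> borel_measurable Q" using Sm by (simp add: case_prod_beta')
  have [measurable]: "(\<lambda>z. alpha (fst z) (snd z)) \<in> borel_measurable Q" by (rule am')
  have B: "integrable Q (\<lambda>z. 2 * (S T (snd z))\<^sup>2 + 2 * (S (fst z) (snd z))\<^sup>2)"
    using int_snd_Q[OF STi] L2D(3)[OF S] by (simp add: case_prod_beta')
  show "integrable Q (\<lambda>z. (alpha (fst z) (snd z))\<^sup>2)"
    unfolding integrable_iff_bounded
  proof
    show "(\<lambda>z. (alpha (fst z) (snd z))\<^sup>2) \<in> borel_measurable Q" by measurable
    have m1: "(\<lambda>z. ennreal ((alpha (fst z) (snd z))\<^sup>2)) \<in> borel_measurable Q" by measurable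
    have m2: "(\<lambda>z. ennreal (2 * (S T (snd z))\<^sup>2 + 2 * (S (fst z) (snd z))\<^sup>2)) \<in> borel_measurable Q" by measurable
    have "(\<integral>\<^sup>+ z. ennreal (norm ((alpha (fst z) (snd z))\<^sup>2)) \<partial>Q) = (\<integral>\<^sup>+ t. \<integral>\<^sup>+ \<omega>. ennreal ((alpha t \<omega>)\<^sup>2) \<partial>M \<partial>L)"
      using PS.M2.nn_integral_fst[OF m1] by simp
    also have "\<dots> \<le> (\<integral>\<^sup>+ t. \<integral>\<^sup>+ \<omega>. ennreal (2 * (S T \<omega>)\<^sup>2 + 2 * (S t \<omega>)\<^sup>2) \<partial>M \<partial>L)"
    proof (rule nn_integral_mono)
      fix t assume t: "t \<in> space L"
      have t': "t \<in> {0..T}" using t by simp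
      have Stm: "(\<lambda>\<omega>. S t \<omega>) \<in> borel_measurable M" by (rule sec_measM[OF Sm t])
      have atm: "(\<lambda>\<omega>. alpha t \<omega>) \<in> borel_measurable M" by (rule sec_measM[OF am t])
      have "(\<integral>\<^sup>+ \<omega>. ennreal ((alpha t \<omega>)\<^sup>2) \<partial>M) \<le> (\<integral>\<^sup>+ \<omega>. ennreal ((S T \<omega> - S t \<omega>)\<^sup>2) \<partial>M)"
      proof (rule alpha_t_bound[OF _ t' _ atm])
        show "(\<lambda>\<omega>. S T \<omega> - S t \<omega>) \<in> borel_measurable M" using Stm by measurable
        show "AE \<omega> in M. alpha t \<omega> = real_cond_exp M (F t) (\<lambda>\<omega>. S T \<omega> - S t \<omega>) \<omega>"
          using al t' unfolding alpha_version_def by blast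
      qed
      also have "\<dots> \<le> (\<integral>\<^sup>+ \<omega>. ennreal (2 * (S T \<omega>)\<^sup>2 + 2 * (S t \<omega>)\<^sup>2) \<partial>M)"
        using sum_sq_le[of 1 "S T _" "-1" "S t _"] by (intro nn_integral_mono ennreal_leI) simp
      finally show "(\<integral>\<^sup>+ \<omega>. ennreal ((alpha t \<omega>)\<^sup>2) \<partial>M) \<le> (\<integral>\<^sup>+ \<omega>. ennreal (2 * (S T \<omega>)\<^sup>2 + 2 * (S t \<omega>)\<^sup>2) \<partial>M)" .
    qed
    also have "\<dots> = (\<integral>\<^sup>+ z. ennreal (2 * (S T (snd z))\<^sup>2 + 2 * (S (fst z) (snd z))\<^sup>2) \<partial>Q)"
      using PS.M2.nn_integral_fst[OF m2] by simp
    also have "\<dots> < \<infinity>"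
    proof -
      have "(\<integral>\<^sup>+ z. ennreal (2 * (S T (snd z))\<^sup>2 + 2 * (S (fst z) (snd z))\<^sup>2) \<partial>Q)
          = (\<integral>\<^sup>+ z. ennreal (norm (2 * (S T (snd z))\<^sup>2 + 2 * (S (fst z) (snd z))\<^sup>2)) \<partial>Q)"
        by (intro nn_integral_cong) simp
      then show ?thesis using B unfolding integrable_iff_bounded by simp
    qed
    finally show "(\<integral>\<^sup>+ z. ennreal (norm ((alpha (fst z) (snd z))\<^sup>2)) \<partial>Q) < \<infinity>" .
  qed
qed


lemma kern_one: "kern_ok (\<lambda>_ _. 1) T"
  unfolding kern_ok_def
proof
  show "(\<lambda>(t, s). 1::real) \<in> borel_measurable (lborel \<Otimes>\<^sub>M lborel)" by simp
  show "\<forall>t\<in>{0..T}. (\<integral>\<^sup>+ s. ennreal ((1::real)\<^sup>2) * indicator {0..t} s \<partial>lborel) \<le> ennreal T"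
  proof
    fix t :: real assume t: "t \<in> {0..T}"
    have "(\<integral>\<^sup>+ s. ennreal ((1::real)\<^sup>2) * indicator {0..t} s \<partial>lborel) = emeasure lborel {0..t}"
      by simp
    also have "\<dots> = ennreal t" using t by simp
    also have "\<dots> \<le> ennreal T" using t by (intro ennreal_leI) simp
    finally show "(\<integral>\<^sup>+ s. ennreal ((1::real)\<^sup>2) * indicator {0..t} s \<partial>lborel) \<le> ennreal T" .
  qed
qed

lemma X_volt: "Xproc X0 p t \<omega> = X0 + volt (\<lambda>_ _. 1) p t \<omega>"
  by (simp add: Xproc_def volt_def)

lemma sqi_X: "p \<in> L2 M F T \<Longrightarrow> sqi (\<lambda>z. Xproc X0 p (fst z) (snd z))"
  using sqi_lin[OF sqi_const[of X0] sqi_volt[OF kern_one], of p 1 1] by (simp add: X_volt)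

lemma LINT_L: "(LINT t:{0..T}|lborel. f t) = (\<integral>t. f t \<partial>L)" for f :: "real \<Rightarrow> real"
proof -
  have "(\<integral>t. f t \<partial>L) = (\<integral>t. indicator {0..T} t *\<^sub>R f t \<partial>lborel)"
    by (rule integral_restrict_space) simp
  then show ?thesis by (simp add: set_lebesgue_integral_def)
qed

lemma XT_int:
  assumes p: "p \<in> L2 M F T"
  shows "integrable M (\<lambda>\<omega>. (Xproc X0 p T \<omega>)\<^sup>2)"
proof -
  note pm = L2D(2)[OF p]
  have TL: "T \<in> space L" using T_pos by simp
  have Vm: "(\<lambda>\<omega>. volt (\<lambda>_ _. 1) p T \<omega>) \<in> borel_measurable M"
    using sec_measM[OF volt_meas[OF kern_one pm] TL] .
  have Hm: "(\<lambda>\<omega>. \<integral>\<^sup>+ s. ennreal ((p s \<omega>)\<^sup>2) \<partial>L) \<in> borel_measurable M" by (rule H_meas[OF pm])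
  have Vi: "integrable M (\<lambda>\<omega>. (volt (\<lambda>_ _. 1) p T \<omega>)\<^sup>2)"
    unfolding integrable_iff_bounded
  proof
    show "(\<lambda>\<omega>. (volt (\<lambda>_ _. 1) p T \<omega>)\<^sup>2) \<in> borel_measurable M" using Vm by measurable
    have "(\<integral>\<^sup>+ \<omega>. ennreal (norm ((volt (\<lambda>_ _. 1) p T \<omega>)\<^sup>2)) \<partial>M) \<le> (\<integral>\<^sup>+ \<omega>. ennreal T * (\<integral>\<^sup>+ s. ennreal ((p s \<omega>)\<^sup>2) \<partial>L) \<partial>M)"
    proof (rule nn_integral_mono)
      fix \<omega> assume \<omega>: "\<omega> \<in> space M"
      show "ennreal (norm ((volt (\<lambda>_ _. 1) p T \<omega>)\<^sup>2)) \<le> ennreal T * (\<integral>\<^sup>+ s. ennreal ((p s \<omega>)\<^sup>2) \<partial>L)"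
        using volt_bound[of "\<lambda>_ _. 1" T p \<omega> T, OF kern_one sec_meas[OF pm \<omega>]] T_pos by simp
    qed
    also have "\<dots> = ennreal T * (\<integral>\<^sup>+ \<omega>. (\<integral>\<^sup>+ s. ennreal ((p s \<omega>)\<^sup>2) \<partial>L) \<partial>M)"
      by (rule nn_integral_cmult[OF Hm])
    also have "\<dots> < \<infinity>" using L2_nn_fin[OF p] by (simp add: ennreal_mult_less_top)
    finally show "(\<integral>\<^sup>+ \<omega>. ennreal (norm ((volt (\<lambda>_ _. 1) p T \<omega>)\<^sup>2)) \<partial>M) < \<infinity>" .
  qed
  have "integrable M (\<lambda>\<omega>. 2 * X0\<^sup>2 * 1\<^sup>2 + 2 * 1\<^sup>2 * (volt (\<lambda>_ _. 1) p T \<omega>)\<^sup>2)"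
    using Vi by simp
  then show ?thesis
  proof (rule Bochner_Integration.integrable_bound)
    show "(\<lambda>\<omega>. (Xproc X0 p T \<omega>)\<^sup>2) \<in> borel_measurable M" using Vm by (simp add: X_volt)
    show "AE \<omega> in M. norm ((Xproc X0 p T \<omega>)\<^sup>2) \<le> norm (2 * X0\<^sup>2 * 1\<^sup>2 + 2 * 1\<^sup>2 * (volt (\<lambda>_ _. 1) p T \<omega>)\<^sup>2)"
      by (intro AE_I2 norm_le_of) (auto simp: X_volt intro: sum_sq_le[of X0 1 1, simplified])
  qed
qed

end

context fsetting begin

lemma Qfacts:
  fixes f :: "real \<Rightarrow> 'a \<Rightarrow> real"
  assumes "integrable Q (\<lambda>z. f (fst z) (snd z))"
  shows "integrable M (\<lambda>\<omega>. \<integral>t. f t \<omega> \<partial>L)" "AE \<omega> in M. integrable L (\<lambda>t. f t \<omega>)"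
    "(\<integral>\<omega>. (\<integral>t. f t \<omega> \<partial>L) \<partial>M) = (\<integral>z. f (fst z) (snd z) \<partial>Q)"
proof -
  have i: "integrable Q (case_prod f)" using assms by (simp add: case_prod_beta')
  show "integrable M (\<lambda>\<omega>. \<integral>t. f t \<omega> \<partial>L)" by (rule PS.integrable_snd[OF i])
  show "AE \<omega> in M. integrable L (\<lambda>t. f t \<omega>)" by (rule PS.AE_integrable_snd[OF i])
  show "(\<integral>\<omega>. (\<integral>t. f t \<omega> \<partial>L) \<partial>M) = (\<integral>z. f (fst z) (snd z) \<partial>Q)"
    using PS.integral_snd[OF i] by (simp add: case_prod_beta')
qed

end

locale jsetting = msetting M F T h h' Bh G CG g
  for M :: "'a measure" and F T h h' Bh G CG g +
  fixes alpha :: "'a proc" and X0 :: real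
  assumes asqi: "sqi (\<lambda>z. alpha (fst z) (snd z))"
begin

definition "I1 p \<omega> = (\<integral>t. alpha t \<omega> * p t \<omega> \<partial>L)"
definition "I2 p \<omega> = (\<integral>t. (p t \<omega>)\<^sup>2 \<partial>L)"
definition "I3 p \<omega> = (\<integral>t. h (Zproc g G p t \<omega>) * p t \<omega> \<partial>L)"
definition "I4 p \<omega> = (\<integral>t. (Xproc X0 p t \<omega>)\<^sup>2 \<partial>L)"
definition "I5 p \<omega> = (Xproc X0 p T \<omega>)\<^sup>2"

lemma Qi1: "p \<in> L2 M F T \<Longrightarrow> integrable Q (\<lambda>z. alpha (fst z) (snd z) * p (fst z) (snd z))"
  by (rule sqi_prod[OF asqi sqi_L2])
lemma Qi2: "p \<in> L2 M F T \<Longrightarrow> integrable Q (\<lambda>z. (p (fst z) (snd z))\<^sup>2)"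
  using sqi_L2[of p] unfolding sqi_def by auto
lemma Qi3: "p \<in> L2 M F T \<Longrightarrow> integrable Q (\<lambda>z. h (Zproc g G p (fst z) (snd z)) * p (fst z) (snd z))"
  by (rule sqi_prod[OF sqi_h[OF sqi_Z] sqi_L2])
lemma Qi4: "p \<in> L2 M F T \<Longrightarrow> integrable Q (\<lambda>z. (Xproc X0 p (fst z) (snd z))\<^sup>2)"
  using sqi_X[of p X0] unfolding sqi_def by auto

lemma J_eq:
  assumes p: "p \<in> L2 M F T"
  shows "J M T X0 gam phi rho S alpha h G g p =
    (\<integral>\<omega>. I1 p \<omega> \<partial>M) - gam / 2 * (\<integral>\<omega>. I2 p \<omega> \<partial>M) - (\<integral>\<omega>. I3 p \<omega> \<partial>M)
     - phi / 2 * (\<integral>\<omega>. I4 p \<omega> \<partial>M) - rho / 2 * (\<integral>\<omega>. I5 p \<omega> \<partial>M) + X0 * (\<integral>\<omega>. S T \<omega> \<partial>M)"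
proof -
  note f1 = Qfacts[OF Qi1[OF p]] and f2 = Qfacts[OF Qi2[OF p]] and f3 = Qfacts[OF Qi3[OF p]] and f4 = Qfacts[OF Qi4[OF p]]
  have i5: "integrable M (I5 p)" unfolding I5_def[abs_def] by (rule XT_int[OF p])
  have e: "(\<integral>\<omega>. (LINT t:{0..T}|lborel. (alpha t \<omega> - gam / 2 * p t \<omega> - h (Zproc g G p t \<omega>)) * p t \<omega>)
            - phi / 2 * (LINT t:{0..T}|lborel. (Xproc X0 p t \<omega>)\<^sup>2) - rho / 2 * (Xproc X0 p T \<omega>)\<^sup>2 \<partial>M)
      = (\<integral>\<omega>. I1 p \<omega> - gam / 2 * I2 p \<omega> - I3 p \<omega> - phi / 2 * I4 p \<omega> - rho / 2 * I5 p \<omega> \<partial>M)"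
  proof (rule integral_cong_AE)
    show "(\<lambda>\<omega>. I1 p \<omega> - gam / 2 * I2 p \<omega> - I3 p \<omega> - phi / 2 * I4 p \<omega> - rho / 2 * I5 p \<omega>) \<in> borel_measurable M"
      using f1(1) f2(1) f3(1) f4(1) i5 unfolding I1_def I2_def I3_def I4_def by (intro borel_measurable_diff borel_measurable_times) auto
    show "AE \<omega> in M. (LINT t:{0..T}|lborel. (alpha t \<omega> - gam / 2 * p t \<omega> - h (Zproc g G p t \<omega>)) * p t \<omega>)
            - phi / 2 * (LINT t:{0..T}|lborel. (Xproc X0 p t \<omega>)\<^sup>2) - rho / 2 * (Xproc X0 p T \<omega>)\<^sup>2
        = I1 p \<omega> - gam / 2 * I2 p \<omega> - I3 p \<omega> - phi / 2 * I4 p \<omega> - rho / 2 * I5 p \<omega>"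
      using f1(2) f2(2) f3(2)
    proof eventually_elim
      case (elim \<omega>)
      have "(\<integral>t. (alpha t \<omega> - gam / 2 * p t \<omega> - h (Zproc g G p t \<omega>)) * p t \<omega> \<partial>L)
          = (\<integral>t. alpha t \<omega> * p t \<omega> - gam / 2 * (p t \<omega>)\<^sup>2 - h (Zproc g G p t \<omega>) * p t \<omega> \<partial>L)"
        by (intro Bochner_Integration.integral_cong) (auto simp: algebra_simps power2_eq_square)
      also have "\<dots> = I1 p \<omega> - gam / 2 * I2 p \<omega> - I3 p \<omega>"
        using elim by (simp add: I1_def I2_def I3_def)
      finally show ?case by (simp add: LINT_L I4_def I5_def)
    qed
    show "(\<lambda>\<omega>. (LINT t:{0..T}|lborel. (alpha t \<omega> - gam / 2 * p t \<omega> - h (Zproc g G p t \<omega>)) * p t \<omega>)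
            - phi / 2 * (LINT t:{0..T}|lborel. (Xproc X0 p t \<omega>)\<^sup>2) - rho / 2 * (Xproc X0 p T \<omega>)\<^sup>2) \<in> borel_measurable M"
    proof -
      have q: "integrable Q (\<lambda>z. (alpha (fst z) (snd z) - gam / 2 * p (fst z) (snd z) - h (Zproc g G p (fst z) (snd z))) * p (fst z) (snd z))"
      proof -
        have "integrable Q (\<lambda>z. alpha (fst z) (snd z) * p (fst z) (snd z) - gam / 2 * (p (fst z) (snd z))\<^sup>2 - h (Zproc g G p (fst z) (snd z)) * p (fst z) (snd z))"
          using Qi1[OF p] Qi2[OF p] Qi3[OF p] by auto
        then show ?thesis by (simp add: algebra_simps power2_eq_square)
      qed
      have m1: "(\<lambda>\<omega>. \<integral>t. (alpha t \<omega> - gam / 2 * p t \<omega> - h (Zproc g G p t \<omega>)) * p t \<omega> \<partial>L) \<in> borel_measurable M"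
        using Qfacts(1)[OF q] by auto
      have m5: "(\<lambda>\<omega>. (Xproc X0 p T \<omega>)\<^sup>2) \<in> borel_measurable M" using XT_int[OF p] by auto
      show ?thesis using m1 f4(1) m5 unfolding LINT_L
        by (intro borel_measurable_diff borel_measurable_times) auto
    qed
  qed
  have "(\<integral>\<omega>. I1 p \<omega> - gam / 2 * I2 p \<omega> - I3 p \<omega> - phi / 2 * I4 p \<omega> - rho / 2 * I5 p \<omega> \<partial>M)
      = (\<integral>\<omega>. I1 p \<omega> \<partial>M) - gam / 2 * (\<integral>\<omega>. I2 p \<omega> \<partial>M) - (\<integral>\<omega>. I3 p \<omega> \<partial>M)
     - phi / 2 * (\<integral>\<omega>. I4 p \<omega> \<partial>M) - rho / 2 * (\<integral>\<omega>. I5 p \<omega> \<partial>M)"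
    using f1(1) f2(1) f3(1) f4(1) i5 unfolding I1_def[abs_def] I2_def[abs_def] I3_def[abs_def] I4_def[abs_def]
    by simp
  with e show ?thesis unfolding J_def by simp
qed


lemma sq_convex: "0 \<le> \<theta> \<Longrightarrow> \<theta> \<le> 1 \<Longrightarrow> (\<theta> * a + (1 - \<theta>) * b)\<^sup>2 \<le> \<theta> * a\<^sup>2 + (1 - \<theta>) * (b::real)\<^sup>2"
proof -
  assume th: "0 \<le> \<theta>" "\<theta> \<le> 1"
  have "\<theta> * a\<^sup>2 + (1 - \<theta>) * b\<^sup>2 - (\<theta> * a + (1 - \<theta>) * b)\<^sup>2 = \<theta> * (1 - \<theta>) * (a - b)\<^sup>2"
    by (simp add: power2_eq_square algebra_simps)
  moreover have "0 \<le> \<theta> * (1 - \<theta>) * (a - b)\<^sup>2" using th by simp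
  ultimately show ?thesis by linarith
qed

lemma X_lin:
  assumes u: "u \<in> L2 M F T" and v: "v \<in> L2 M F T" and \<omega>: "\<omega> \<in> space M"
    and ui: "integrable L (\<lambda>s. (u s \<omega>)\<^sup>2)" and vi: "integrable L (\<lambda>s. (v s \<omega>)\<^sup>2)" and t: "t \<in> {0..T}"
  shows "Xproc X0 (uy u v \<theta>) t \<omega> = \<theta> * Xproc X0 u t \<omega> + (1 - \<theta>) * Xproc X0 v t \<omega>"
proof -
  have um: "(\<lambda>s. u s \<omega>) \<in> borel_measurable L" by (rule sec_meas[OF L2D(2)[OF u] \<omega>])
  have vm: "(\<lambda>s. v s \<omega>) \<in> borel_measurable L" by (rule sec_meas[OF L2D(2)[OF v] \<omega>])
  show ?thesis
    using volt_lin[of "\<lambda>_ _. 1" T t u \<omega> v \<theta> "1 - \<theta>", OF kern_one t um ui vm vi]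
    by (simp add: X_volt uy_def algebra_simps)
qed

lemma main_ineq:
  assumes u: "u \<in> L2 M F T" and v: "v \<in> L2 M F T" and A: "A_version M F T h h' G g Aop"
    and mono: "monotone_op M F T Aop" and th: "0 \<le> \<theta>" "\<theta> \<le> 1"
    and phi: "phi \<ge> 0" and rho: "rho \<ge> 0"
  shows "J M T X0 gam phi rho S alpha h G g (uy u v \<theta>)
     \<ge> \<theta> * J M T X0 gam phi rho S alpha h G g u + (1 - \<theta>) * J M T X0 gam phi rho S alpha h G g v
       + gam * \<theta> * (1 - \<theta>) / 2 * (\<integral>z. (pdiff u v (fst z) (snd z))\<^sup>2 \<partial>Q)"
proof -
  define p where "p = uy u v \<theta>"
  have p: "p \<in> L2 M F T" unfolding p_def by (rule uy_L2[OF u v])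
  define N where "N = (\<integral>z. (pdiff u v (fst z) (snd z))\<^sup>2 \<partial>Q)"
  define K where "K = X0 * (\<integral>\<omega>. S T \<omega> \<partial>M)"
  have pe: "p (fst z) (snd z) = \<theta> * u (fst z) (snd z) + (1 - \<theta>) * v (fst z) (snd z)" for z
    by (simp add: p_def uy_def)
  have E1: "(\<integral>\<omega>. I1 p \<omega> \<partial>M) = \<theta> * (\<integral>\<omega>. I1 u \<omega> \<partial>M) + (1 - \<theta>) * (\<integral>\<omega>. I1 v \<omega> \<partial>M)"
  proof -
    have "(\<integral>\<omega>. I1 p \<omega> \<partial>M) = (\<integral>z. alpha (fst z) (snd z) * p (fst z) (snd z) \<partial>Q)"
      unfolding I1_def by (rule Qfacts(3)[OF Qi1[OF p]])
    also have "\<dots> = (\<integral>z. \<theta> * (alpha (fst z) (snd z) * u (fst z) (snd z)) + (1 - \<theta>) * (alpha (fst z) (snd z) * v (fst z) (snd z)) \<partial>Q)"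
      unfolding pe by (simp add: algebra_simps)
    also have "\<dots> = \<theta> * (\<integral>z. alpha (fst z) (snd z) * u (fst z) (snd z) \<partial>Q) + (1 - \<theta>) * (\<integral>z. alpha (fst z) (snd z) * v (fst z) (snd z) \<partial>Q)"
      using Qi1[OF u] Qi1[OF v] by simp
    also have "\<dots> = \<theta> * (\<integral>\<omega>. I1 u \<omega> \<partial>M) + (1 - \<theta>) * (\<integral>\<omega>. I1 v \<omega> \<partial>M)"
      unfolding I1_def using Qfacts(3)[OF Qi1[OF u]] Qfacts(3)[OF Qi1[OF v]] by simp
    finally show ?thesis .
  qed
  have E2: "(\<integral>\<omega>. I2 p \<omega> \<partial>M) = \<theta> * (\<integral>\<omega>. I2 u \<omega> \<partial>M) + (1 - \<theta>) * (\<integral>\<omega>. I2 v \<omega> \<partial>M) - \<theta> * (1 - \<theta>) * N"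
  proof -
    have w: "pdiff u v \<in> L2 M F T" by (rule L2_pdiff[OF u v])
    have "(\<integral>\<omega>. I2 p \<omega> \<partial>M) = (\<integral>z. (p (fst z) (snd z))\<^sup>2 \<partial>Q)"
      unfolding I2_def by (rule Qfacts(3)[OF Qi2[OF p]])
    also have "\<dots> = (\<integral>z. \<theta> * (u (fst z) (snd z))\<^sup>2 + (1 - \<theta>) * (v (fst z) (snd z))\<^sup>2 - \<theta> * (1 - \<theta>) * (pdiff u v (fst z) (snd z))\<^sup>2 \<partial>Q)"
      unfolding pe by (intro Bochner_Integration.integral_cong) (auto simp: pdiff_def power2_eq_square algebra_simps)
    also have "\<dots> = \<theta> * (\<integral>z. (u (fst z) (snd z))\<^sup>2 \<partial>Q) + (1 - \<theta>) * (\<integral>z. (v (fst z) (snd z))\<^sup>2 \<partial>Q) - \<theta> * (1 - \<theta>) * N"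
      using Qi2[OF u] Qi2[OF v] Qi2[OF w] unfolding N_def by simp
    also have "\<dots> = \<theta> * (\<integral>\<omega>. I2 u \<omega> \<partial>M) + (1 - \<theta>) * (\<integral>\<omega>. I2 v \<omega> \<partial>M) - \<theta> * (1 - \<theta>) * N"
      unfolding I2_def using Qfacts(3)[OF Qi2[OF u]] Qfacts(3)[OF Qi2[OF v]] by simp
    finally show ?thesis .
  qed
  have E3: "(\<integral>\<omega>. I3 p \<omega> \<partial>M) \<le> \<theta> * (\<integral>\<omega>. I3 u \<omega> \<partial>M) + (1 - \<theta>) * (\<integral>\<omega>. I3 v \<omega> \<partial>M)"
  proof -
    have e: "(\<integral>\<omega>. I3 q \<omega> \<partial>M) = Phi q" if "q \<in> L2 M F T" for q
      unfolding I3_def Phi_def by (rule Qfacts(3)[OF Qi3[OF that]])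
    have "Phi p \<le> \<theta> * Phi u + (1 - \<theta>) * Phi v" unfolding p_def by (rule Phi_convex[OF u v A mono th])
    then show ?thesis unfolding e[OF p] e[OF u] e[OF v] .
  qed
  have AEgood: "AE \<omega> in M. \<omega> \<in> space M \<and> integrable L (\<lambda>s. (u s \<omega>)\<^sup>2) \<and> integrable L (\<lambda>s. (v s \<omega>)\<^sup>2)
      \<and> integrable L (\<lambda>t. (Xproc X0 u t \<omega>)\<^sup>2) \<and> integrable L (\<lambda>t. (Xproc X0 v t \<omega>)\<^sup>2)"
    using AE_space L2_AE[OF u] L2_AE[OF v] Qfacts(2)[OF Qi4[OF u]] Qfacts(2)[OF Qi4[OF v]]
    by eventually_elim auto
  have E4: "(\<integral>\<omega>. I4 p \<omega> \<partial>M) \<le> \<theta> * (\<integral>\<omega>. I4 u \<omega> \<partial>M) + (1 - \<theta>) * (\<integral>\<omega>. I4 v \<omega> \<partial>M)"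
  proof -
    have iu: "integrable M (I4 u)" and iv: "integrable M (I4 v)" and ip: "integrable M (I4 p)"
      unfolding I4_def[abs_def] using Qfacts(1)[OF Qi4[OF u]] Qfacts(1)[OF Qi4[OF v]] Qfacts(1)[OF Qi4[OF p]] by auto
    have "(\<integral>\<omega>. I4 p \<omega> \<partial>M) \<le> (\<integral>\<omega>. \<theta> * I4 u \<omega> + (1 - \<theta>) * I4 v \<omega> \<partial>M)"
    proof (rule integral_mono_AE[OF ip])
      show "integrable M (\<lambda>\<omega>. \<theta> * I4 u \<omega> + (1 - \<theta>) * I4 v \<omega>)" using iu iv by auto
      show "AE \<omega> in M. I4 p \<omega> \<le> \<theta> * I4 u \<omega> + (1 - \<theta>) * I4 v \<omega>"
        using AEgood
      proof eventually_elim
        case (elim \<omega>)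
        have "I4 p \<omega> = (\<integral>t. (\<theta> * Xproc X0 u t \<omega> + (1 - \<theta>) * Xproc X0 v t \<omega>)\<^sup>2 \<partial>L)"
          unfolding I4_def p_def using elim by (intro Bochner_Integration.integral_cong refl) (simp add: X_lin[OF u v])
        also have "\<dots> \<le> (\<integral>t. \<theta> * (Xproc X0 u t \<omega>)\<^sup>2 + (1 - \<theta>) * (Xproc X0 v t \<omega>)\<^sup>2 \<partial>L)"
        proof (rule integral_mono)
          show "integrable L (\<lambda>t. \<theta> * (Xproc X0 u t \<omega>)\<^sup>2 + (1 - \<theta>) * (Xproc X0 v t \<omega>)\<^sup>2)" using elim by auto
          show "integrable L (\<lambda>t. (\<theta> * Xproc X0 u t \<omega> + (1 - \<theta>) * Xproc X0 v t \<omega>)\<^sup>2)"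
          proof -
            have "integrable L (\<lambda>t. 2 * \<theta>\<^sup>2 * (Xproc X0 u t \<omega>)\<^sup>2 + 2 * (1 - \<theta>)\<^sup>2 * (Xproc X0 v t \<omega>)\<^sup>2)"
              using elim by auto
            then show ?thesis
            proof (rule Bochner_Integration.integrable_bound)
              have m1: "(\<lambda>t. Xproc X0 u t \<omega>) \<in> borel_measurable L"
                using sec_meas[of "Xproc X0 u" \<omega>] sqi_X[OF u, of X0] elim unfolding sqi_def by (simp add: case_prod_beta')
              have m2: "(\<lambda>t. Xproc X0 v t \<omega>) \<in> borel_measurable L"
                using sec_meas[of "Xproc X0 v" \<omega>] sqi_X[OF v, of X0] elim unfolding sqi_def by (simp add: case_prod_beta')
              show "(\<lambda>t. (\<theta> * Xproc X0 u t \<omega> + (1 - \<theta>) * Xproc X0 v t \<omega>)\<^sup>2) \<in> borel_measurable L"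
                using m1 m2 by measurable
              show "AE t in L. norm ((\<theta> * Xproc X0 u t \<omega> + (1 - \<theta>) * Xproc X0 v t \<omega>)\<^sup>2) \<le> norm (2 * \<theta>\<^sup>2 * (Xproc X0 u t \<omega>)\<^sup>2 + 2 * (1 - \<theta>)\<^sup>2 * (Xproc X0 v t \<omega>)\<^sup>2)"
                by (intro AE_I2 norm_le_of sum_sq_le) simp
            qed
          qed
          show "(\<theta> * Xproc X0 u t \<omega> + (1 - \<theta>) * Xproc X0 v t \<omega>)\<^sup>2 \<le> \<theta> * (Xproc X0 u t \<omega>)\<^sup>2 + (1 - \<theta>) * (Xproc X0 v t \<omega>)\<^sup>2" for t
            by (rule sq_convex[OF th])
        qed
        also have "\<dots> = \<theta> * I4 u \<omega> + (1 - \<theta>) * I4 v \<omega>"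
          unfolding I4_def using elim by simp
        finally show ?case .
      qed
    qed
    also have "\<dots> = \<theta> * (\<integral>\<omega>. I4 u \<omega> \<partial>M) + (1 - \<theta>) * (\<integral>\<omega>. I4 v \<omega> \<partial>M)"
      using iu iv by simp
    finally show ?thesis .
  qed
  have E5: "(\<integral>\<omega>. I5 p \<omega> \<partial>M) \<le> \<theta> * (\<integral>\<omega>. I5 u \<omega> \<partial>M) + (1 - \<theta>) * (\<integral>\<omega>. I5 v \<omega> \<partial>M)"
  proof -
    have iu: "integrable M (I5 u)" and iv: "integrable M (I5 v)" and ip: "integrable M (I5 p)"
      unfolding I5_def[abs_def] using XT_int[OF u] XT_int[OF v] XT_int[OF p] by auto
    have "(\<integral>\<omega>. I5 p \<omega> \<partial>M) \<le> (\<integral>\<omega>. \<theta> * I5 u \<omega> + (1 - \<theta>) * I5 v \<omega> \<partial>M)"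
    proof (rule integral_mono_AE[OF ip])
      show "integrable M (\<lambda>\<omega>. \<theta> * I5 u \<omega> + (1 - \<theta>) * I5 v \<omega>)" using iu iv by auto
      show "AE \<omega> in M. I5 p \<omega> \<le> \<theta> * I5 u \<omega> + (1 - \<theta>) * I5 v \<omega>"
        using AEgood
      proof eventually_elim
        case (elim \<omega>)
        have "T \<in> {0..T}" using T_pos by simp
        then show ?case
          unfolding I5_def p_def using elim X_lin[OF u v] sq_convex[OF th] by simp
      qed
    qed
    also have "\<dots> = \<theta> * (\<integral>\<omega>. I5 u \<omega> \<partial>M) + (1 - \<theta>) * (\<integral>\<omega>. I5 v \<omega> \<partial>M)"
      using iu iv by simp
    finally show ?thesis .
  qed
  define D3 where "D3 = (\<integral>\<omega>. I3 p \<omega> \<partial>M) - \<theta> * (\<integral>\<omega>. I3 u \<omega> \<partial>M) - (1 - \<theta>) * (\<integral>\<omega>. I3 v \<omega> \<partial>M)"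
  define D4 where "D4 = (\<integral>\<omega>. I4 p \<omega> \<partial>M) - \<theta> * (\<integral>\<omega>. I4 u \<omega> \<partial>M) - (1 - \<theta>) * (\<integral>\<omega>. I4 v \<omega> \<partial>M)"
  define D5 where "D5 = (\<integral>\<omega>. I5 p \<omega> \<partial>M) - \<theta> * (\<integral>\<omega>. I5 u \<omega> \<partial>M) - (1 - \<theta>) * (\<integral>\<omega>. I5 v \<omega> \<partial>M)"
  have key: "J M T X0 gam phi rho S alpha h G g p - \<theta> * J M T X0 gam phi rho S alpha h G g u - (1 - \<theta>) * J M T X0 gam phi rho S alpha h G g v
      = gam * \<theta> * (1 - \<theta>) / 2 * N - D3 - phi / 2 * D4 - rho / 2 * D5"
    unfolding J_eq[OF p] J_eq[OF u] J_eq[OF v] E1 E2 D3_def D4_def D5_def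
    by (simp add: field_simps)
  have "D3 \<le> 0" "D4 \<le> 0" "D5 \<le> 0" using E3 E4 E5 unfolding D3_def D4_def D5_def by linarith+
  then have "0 \<le> - D3 - phi / 2 * D4 - rho / 2 * D5"
    using mult_nonneg_nonpos[OF phi \<open>D4 \<le> 0\<close>] mult_nonneg_nonpos[OF rho \<open>D5 \<le> 0\<close>] by linarith
  then show ?thesis using key unfolding p_def N_def by linarith
qed

end

theorem mainTheorem10:
  fixes M :: "'a measure" and F :: "real \<Rightarrow> 'a measure" and T :: real
    and X0 gam phi rho :: real and S g alpha :: "'a proc"
    and G :: "real \<Rightarrow> real \<Rightarrow> real" and h h' :: "real \<Rightarrow> real"
    and Aop :: "'a proc \<Rightarrow> 'a proc"
  assumes T_pos: "T > 0"
    and filt: "filtered_prob_space M F T"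
    and usual: "usual_conditions M F T"
    and X0_pos: "X0 > 0" and gam_pos: "gam > 0" and phi_nn: "phi \<ge> 0" and rho_nn: "rho \<ge> 0"
    and S_L2: "S \<in> L2 M F T"
    and ST_meas: "S T \<in> borel_measurable (F T)"
    and ST_sq: "integrable M (\<lambda>\<omega>. (S T \<omega>)\<^sup>2)"
    and g_L2: "g \<in> L2 M F T"
    and alpha: "alpha_version M F T S alpha"
    and G_adm: "admissible_kernel T G"
    and h_deriv: "\<And>x. (h has_real_derivative h' x) (at x)"
    and h'_bdd: "\<exists>C. \<forall>x. \<bar>h' x\<bar> \<le> C"
    and A_ver: "A_version M F T h h' G g Aop"
  shows "(\<forall>u\<in>L2 M F T. ip M T u (volt (Hker T phi rho) u) \<ge> 0)
    \<and> (monotone_op M F T Aop \<longrightarrow>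
        (\<forall>u\<in>L2 M F T. \<forall>v\<in>L2 M F T. \<forall>\<theta>\<in>{0<..<1::real}.
           J M T X0 gam phi rho S alpha h G g (padd (pscale \<theta> u) (pscale (1 - \<theta>) v))
             \<ge> \<theta> * J M T X0 gam phi rho S alpha h G g u
               + (1 - \<theta>) * J M T X0 gam phi rho S alpha h G g v
               + gam * \<theta> * (1 - \<theta>) / 2 * (nrm M T (pdiff u v))\<^sup>2))"
proof -
  interpret fs: fsetting M F T using T_pos filt by unfold_locales
  have P1: "\<forall>u\<in>L2 M F T. ip M T u (volt (Hker T phi rho) u) \<ge> 0"
    using fs.part1 phi_nn rho_nn by blast
  have P2: "\<forall>u\<in>L2 M F T. \<forall>v\<in>L2 M F T. \<forall>\<theta>\<in>{0<..<1::real}.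
           J M T X0 gam phi rho S alpha h G g (padd (pscale \<theta> u) (pscale (1 - \<theta>) v))
             \<ge> \<theta> * J M T X0 gam phi rho S alpha h G g u
               + (1 - \<theta>) * J M T X0 gam phi rho S alpha h G g v
               + gam * \<theta> * (1 - \<theta>) / 2 * (nrm M T (pdiff u v))\<^sup>2"
    if mono: "monotone_op M F T Aop"
  proof (intro ballI)
    fix u v \<theta> assume u: "u \<in> L2 M F T" and v: "v \<in> L2 M F T" and th: "\<theta> \<in> {0<..<1::real}"
    obtain Bh where hb: "\<forall>x. \<bar>h' x\<bar> \<le> Bh" using h'_bdd by blast
    obtain C where GC: "\<forall>t\<in>{0..T}. (\<integral>\<^sup>+ s. ennreal ((G t s)\<^sup>2) * indicator {0..t} s \<partial>lborel) \<le> ennreal C"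
      using G_adm unfolding admissible_kernel_def by blast
    have Gk: "fs.kern_ok G C"
      using G_adm GC unfolding admissible_kernel_def fs.kern_ok_def by blast
    interpret ms: msetting M F T h h' Bh G C g
      by unfold_locales (use h_deriv hb Gk g_L2 in auto)
    interpret js: jsetting M F T h h' Bh G C g alpha X0
      by unfold_locales (rule fs.alpha_sqi[OF S_L2 ST_meas ST_sq alpha])
    have e: "padd (pscale \<theta> u) (pscale (1 - \<theta>) v) = ms.uy u v \<theta>"
      by (simp add: fun_eq_iff padd_def pscale_def ms.uy_def)
    have nn: "(nrm M T (pdiff u v))\<^sup>2 = (\<integral>z. (pdiff u v (fst z) (snd z))\<^sup>2 \<partial>fs.Q)"
    proof -
      have "ip M T (pdiff u v) (pdiff u v) = (\<integral>z. (pdiff u v (fst z) (snd z))\<^sup>2 \<partial>fs.Q)"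
        unfolding ip_def PM_def by (simp add: case_prod_beta' power2_eq_square)
      moreover have "0 \<le> (\<integral>z. (pdiff u v (fst z) (snd z))\<^sup>2 \<partial>fs.Q)" by simp
      ultimately show ?thesis unfolding nrm_def by simp
    qed
    have th': "0 \<le> \<theta>" "\<theta> \<le> 1" using th by auto
    show "J M T X0 gam phi rho S alpha h G g (padd (pscale \<theta> u) (pscale (1 - \<theta>) v))
             \<ge> \<theta> * J M T X0 gam phi rho S alpha h G g u
               + (1 - \<theta>) * J M T X0 gam phi rho S alpha h G g v
               + gam * \<theta> * (1 - \<theta>) / 2 * (nrm M T (pdiff u v))\<^sup>2"
      unfolding e nn by (rule js.main_ineq[OF u v A_ver mono th' phi_nn rho_nn])
  qed
  show ?thesis using P1 P2 by blast
qed

end
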